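(* Uniformly in $z \geq 1$, \[ \sum_{\substack{m_1, m_2 \leq z\\ (m_1, m_2) = 1}} \frac{t(m_1)t(m_2)\,m_1m_2}{\max(m_1,m_2)^3} \gg \frac{1}{\log z}\left( \sum_{m \leq z} \frac{t(m)}{\sqrt{m}} \right)^2.\] In particular, if $\log z > 3 \lambda \log \log \lambda$, then \[ \sum_{\substack{m_1, m_2 \leq z\\ (m_1, m_2) = 1}} \frac{t(m_1)t(m_2)\,m_1m_2}{\max(m_1,m_2)^3}\geq \exp\left((1 + o(1))\frac{\lambda}{\log \lambda}\right), \qquad x\to\infty.\]
   Context: Let $x$ be large and $\lambda = \sqrt{\log x \log\log x}$. Define the multiplicative function $r$ by $r(p) = \frac{\lambda}{\sqrt{p}\log p}$ for primes $\lambda^2 \le p \le \exp((\log\lambda)^2)$, $r(p)=0$ for other primes, and $r(p^n)=0$ for $n\ge2$. Define the multiplicative function $t$ by $t(p^n) = \frac{r(p^n)}{1+r(p^n)^2}$. *)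

theory Defs
  imports "HOL-Computational_Algebra.Primes" "HOL-Analysis.Analysis"
begin

definition lam :: "real \<Rightarrow> real" where
  "lam x = sqrt (ln x * ln (ln x))"

definition r_pp :: "real \<Rightarrow> nat \<Rightarrow> nat \<Rightarrow> real" where
  "r_pp x p k = (if k = 1 \<and> lam x ^ 2 \<le> real p \<and> real p \<le> exp ((ln (lam x))^2)
                 then lam x / (sqrt (real p) * ln (real p)) else 0)"

definition r_fun :: "real \<Rightarrow> nat \<Rightarrow> real" where
  "r_fun x m = (\<Prod>p\<in>prime_factors m. r_pp x p (multiplicity p m))"

definition t_pp :: "real \<Rightarrow> nat \<Rightarrow> nat \<Rightarrow> real" where
  "t_pp x p k = r_pp x p k / (1 + (r_pp x p k)^2)"

definition t_fun :: "real \<Rightarrow> nat \<Rightarrow> real" where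
  "t_fun x m = (\<Prod>p\<in>prime_factors m. t_pp x p (multiplicity p m))"

end

theory Submission
  imports Defs "HOL-Number_Theory.Prime_Powers" "HOL-Real_Asymp.Real_Asymp"
begin


lemma r_pp_nonneg: "0 \<le> lam x \<Longrightarrow> 0 \<le> r_pp x p k"
  unfolding r_pp_def
  by (cases p) (auto intro!: divide_nonneg_pos mult_pos_pos simp: ln_gt_zero_iff)

lemma t_pp_nonneg: "0 \<le> lam x \<Longrightarrow> 0 \<le> t_pp x p k"
  unfolding t_pp_def using r_pp_nonneg[of x p k] by (simp add: add_pos_nonneg)

lemma t_fun_nonneg: "0 \<le> lam x \<Longrightarrow> 0 \<le> t_fun x m"
  unfolding t_fun_def by (intro prod_nonneg) (simp add: t_pp_nonneg)

lemma t_pp_0: "t_pp x p 0 = 0" by (simp add: t_pp_def r_pp_def)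

lemma t_fun_mult:
  assumes "coprime a b" "a > 0" "b > 0"
  shows "t_fun x (a * b) = t_fun x a * t_fun x b"
proof -
  have disj: "prime_factors a \<inter> prime_factors b = {}"
    using assms(1) by (auto simp: in_prime_factors_iff dest: coprime_common_divisor_nat
        simp: prime_nat_iff)
  have U: "prime_factors (a*b) = prime_factors a \<union> prime_factors b"
    using assms by (intro prime_factors_product) auto
  have ma: "multiplicity p (a*b) = multiplicity p a" if "p \<in> prime_factors a" for p
  proof -
    have "p \<notin> prime_factors b" using that disj by auto
    hence "\<not> p dvd b" using that assms by (auto simp: in_prime_factors_iff)
    hence "multiplicity p b = 0" by (simp add: not_dvd_imp_multiplicity_0)
    thus ?thesis using that assms by (subst prime_elem_multiplicity_mult_distrib) auto
  qed
  have mb: "multiplicity p (a*b) = multiplicity p b" if "p \<in> prime_factors b" for p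
  proof -
    have "p \<notin> prime_factors a" using that disj by auto
    hence "\<not> p dvd a" using that assms by (auto simp: in_prime_factors_iff)
    hence "multiplicity p a = 0" by (simp add: not_dvd_imp_multiplicity_0)
    thus ?thesis using that assms by (subst prime_elem_multiplicity_mult_distrib) auto
  qed
  have "t_fun x (a*b) = (\<Prod>p\<in>prime_factors a \<union> prime_factors b. t_pp x p (multiplicity p (a*b)))"
    unfolding t_fun_def U ..
  also have "\<dots> = (\<Prod>p\<in>prime_factors a. t_pp x p (multiplicity p (a*b))) *
                   (\<Prod>p\<in>prime_factors b. t_pp x p (multiplicity p (a*b)))"
    by (rule prod.union_disjoint) (use disj in auto)
  also have "\<dots> = t_fun x a * t_fun x b" unfolding t_fun_def
    using ma mb by (simp cong: prod.cong)
  finally show ?thesis .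
qed

lemma t_fun_nz_D:
  assumes "t_fun x m \<noteq> 0" "p \<in> prime_factors m"
  shows "multiplicity p m = 1 \<and> lam x ^ 2 \<le> real p \<and> real p \<le> exp ((ln (lam x))^2)"
proof -
  have "t_pp x p (multiplicity p m) \<noteq> 0"
    using assms unfolding t_fun_def by (auto simp: prod_zero_iff)
  hence "r_pp x p (multiplicity p m) \<noteq> 0" by (auto simp: t_pp_def)
  thus ?thesis unfolding r_pp_def by (auto split: if_splits)
qed

lemma t_fun_prime: "prime p \<Longrightarrow> t_fun x p = t_pp x p 1"
  unfolding t_fun_def by (simp add: prime_prime_factors)

lemma t_fun_1 [simp]: "t_fun x 1 = 1" unfolding t_fun_def by simp

lemma t_fun_prod_primes:
  assumes "finite A" "\<And>p. p \<in> A \<Longrightarrow> prime p"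
  shows "t_fun x (\<Prod>A) = (\<Prod>p\<in>A. t_pp x p 1)"
  using assms
proof (induction A rule: finite_induct)
  case (insert q A)
  have "coprime q (\<Prod>A)"
    using insert by (intro prod_coprime_right) (metis insertCI primes_coprime)
  moreover have "q > 0" "\<Prod>A > 0" using insert by (auto intro: prime_gt_0_nat)
  ultimately show ?case using insert
    by (simp add: t_fun_mult t_fun_prime)
qed (simp add: t_fun_def)

lemma prime_factors_prod_primes:
  assumes "finite A" "\<And>p. p \<in> A \<Longrightarrow> prime p"
  shows "prime_factors (\<Prod>A) = A"
proof -
  have "prime_factors (prod id A) = \<Union> ((prime_factors \<circ> id) ` A)"
    using assms by (intro prime_factors_prod) (auto, metis not_prime_0)
  also have "\<dots> = A" using assms by (auto simp: prime_prime_factors)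
  finally show ?thesis by simp
qed

lemma t_fun_nz_prod:
  assumes "t_fun x m \<noteq> 0" "m > 0"
  shows "m = \<Prod>(prime_factors m)"
proof -
  have "m = (\<Prod>p\<in>prime_factors m. p ^ multiplicity p m)"
    using assms by (simp add: prime_factorization_nat)
  also have "\<dots> = (\<Prod>p\<in>prime_factors m. p)"
    using t_fun_nz_D[OF assms(1)] by (intro prod.cong) auto
  finally show ?thesis by simp
qed

lemma t_fun_nz_coprime:
  assumes "t_fun x m \<noteq> 0" "m > 0" "d dvd m"
  shows "coprime d (m div d)"
proof (rule ccontr)
  assume "\<not> coprime d (m div d)"
  hence "gcd d (m div d) \<noteq> 1" by (simp add: coprime_iff_gcd_eq_1)
  then obtain p where p0: "prime p" "p dvd gcd d (m div d)"
    using prime_factor_nat by blast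
  hence p: "prime p" "p dvd d" "p dvd m div d" by auto
  have "p * p dvd d * (m div d)" using p by (intro mult_dvd_mono)
  hence "p ^ 2 dvd m" using assms(3) by (simp add: power2_eq_square)
  hence "2 \<le> multiplicity p m" using p assms(2) by (intro multiplicity_geI) auto
  moreover have "p \<in> prime_factors m" using p assms
    by (auto simp: in_prime_factors_iff intro: dvd_trans dvd_div_iff_mult)
  ultimately show False using t_fun_nz_D[OF assms(1)] by auto
qed


definition psi :: "nat \<Rightarrow> real" where "psi n = (\<Sum>d\<in>{1..n}. mangoldt d)"

lemma div_real_le: "(d::nat) > 0 \<Longrightarrow> real (n div d) \<le> real n / real d"
proof -
  assume d: "d > 0"
  have "(n div d) * d \<le> n" by simp
  hence "real (n div d) * real d \<le> real n" by (metis of_nat_le_iff of_nat_mult)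
  thus ?thesis using d by (simp add: field_simps)
qed

lemma div_real_ge: "(d::nat) > 0 \<Longrightarrow> real n / real d - 1 \<le> real (n div d)"
proof -
  assume d: "d > 0"
  have e: "n = n div d * d + n mod d" by simp
  have "n mod d < d" using d by simp
  hence "n < (n div d + 1) * d" unfolding distrib_right mult_1 using e by linarith
  hence "real n \<le> (real (n div d) + 1) * real d"
    by (metis of_nat_1 of_nat_add of_nat_le_iff of_nat_mult less_imp_le)
  thus ?thesis using d by (simp add: field_simps)
qed

lemma Suc_div_split: "(d::nat) > 0 \<Longrightarrow> Suc n div d = n div d + (if d dvd Suc n then 1 else 0)"
  by (simp add: div_Suc dvd_eq_mod_eq_0)

lemma ln_fact_mangoldt:
  "ln (fact n :: real) = (\<Sum>d\<in>{1..n}. mangoldt d * real (n div d))"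
proof (induction n)
  case 0 thus ?case by simp
next
  case (Suc n)
  have "(\<Sum>d\<in>{1..Suc n}. mangoldt d * real (Suc n div d)) =
        (\<Sum>d\<in>{1..Suc n}. mangoldt d * real (n div d) + (if d dvd Suc n then mangoldt d else 0))"
    by (intro sum.cong refl) (simp add: Suc_div_split algebra_simps)
  also have "\<dots> = (\<Sum>d\<in>{1..Suc n}. mangoldt d * real (n div d)) +
                   (\<Sum>d\<in>{1..Suc n}. (if d dvd Suc n then mangoldt d else 0))"
    by (simp add: sum.distrib)
  also have "(\<Sum>d\<in>{1..Suc n}. mangoldt d * real (n div d)) = (\<Sum>d\<in>{1..n}. mangoldt d * real (n div d))"
    by (simp add: sum.cl_ivl_Suc)
  also have "(\<Sum>d\<in>{1..Suc n}. (if d dvd Suc n then mangoldt d else 0)) =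
             (\<Sum>d | d dvd Suc n. mangoldt d)"
    using dvd_pos_nat[of "Suc n"]
    by (subst sum.inter_filter[symmetric]) (auto intro!: sum.cong dest: dvd_imp_le simp: Suc_le_eq)
  also have "\<dots> = ln (real (Suc n))" by (subst mangoldt_sum) auto
  finally have "(\<Sum>d\<in>{1..Suc n}. mangoldt d * real (Suc n div d)) = ln (fact n) + ln (real (Suc n))"
    using Suc by simp
  also have "\<dots> = ln (fact (Suc n))"
    by (simp add: ln_mult fact_Suc)
  finally show ?case ..
qed

lemma psi_double: "psi (2*m) - psi m \<le> 2 * real m * ln 2"
proof -
  have fe0: "fact m * fact m * (2*m choose m) = (fact (2*m) :: nat)"
    using binomial_fact_lemma[of m "2*m"] by (simp add: mult_2)
  have fe: "(fact (2*m)::real) = fact m * fact m * real (2*m choose m)"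
    by (metis fe0 of_nat_fact of_nat_mult)
  have cpos: "real (2*m choose m) > 0" by simp
  have b: "real (2*m choose m) \<le> 2^(2*m)"
    using binomial_le_pow2[of "2*m" m] by (metis of_nat_le_iff of_nat_numeral of_nat_power)
  have "ln (real (2*m choose m)) \<le> ln (2 ^ (2*m))"
    using b cpos by (subst ln_le_cancel_iff) auto
  also have "\<dots> = 2 * real m * ln 2" by (simp add: ln_realpow)
  finally have C: "ln (real (2*m choose m)) \<le> 2 * real m * ln 2" .
  have "ln (real (2*m choose m)) = ln (fact (2*m)) - 2 * ln (fact m)"
    using fe cpos by (simp add: ln_mult)
  also have "\<dots> = (\<Sum>d\<in>{1..2*m}. mangoldt d * real ((2*m) div d)) - 2 * (\<Sum>d\<in>{1..2*m}. mangoldt d * real (m div d))"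
  proof -
    have "(\<Sum>d\<in>{1..2*m}. mangoldt d * real (m div d)) = (\<Sum>d\<in>{1..m}. mangoldt d * real (m div d))"
      by (rule sum.mono_neutral_right) auto
    thus ?thesis by (simp add: ln_fact_mangoldt)
  qed
  also have "\<dots> = (\<Sum>d\<in>{1..2*m}. mangoldt d * (real ((2*m) div d) - 2 * real (m div d)))"
    by (simp add: sum_subtractf sum_distrib_left algebra_simps)
  also have "\<dots> \<ge> (\<Sum>d\<in>{1..2*m}. if m < d then mangoldt d else 0)"
  proof (intro sum_mono)
    fix d assume d: "d \<in> {1..2*m}"
    have "2 * (m div d) \<le> (2*m) div d"
    proof -
      have "d > 0" using d by simp
      moreover have "2 * (m div d) * d \<le> 2 * m" by (simp add: mult.assoc)
      ultimately show ?thesis by (simp add: less_eq_div_iff_mult_less_eq)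
    qed
    hence A: "real ((2*m) div d) - 2 * real (m div d) \<ge> 0"
      by (metis diff_ge_0_iff_ge of_nat_le_iff of_nat_mult of_nat_numeral)
    show "(if m < d then mangoldt d else 0) \<le> mangoldt d * (real (2 * m div d) - 2 * real (m div d))"
    proof (cases "m < d")
      case True
      hence "m div d = 0" by simp
      moreover have "(2*m) div d \<ge> 1" using d True by (subst less_eq_div_iff_mult_less_eq) auto
      ultimately have "real ((2*m) div d) - 2 * real (m div d) \<ge> 1" by simp
      thus ?thesis using True mangoldt_nonneg[of d] by (simp add: mult_le_cancel_left1)
    qed (use A mangoldt_nonneg[of d] in auto)
  qed
  finally have "(\<Sum>d\<in>{1..2*m}. if m < d then mangoldt d else 0) \<le> 2 * real m * ln 2" using C by linarith
  moreover have "(\<Sum>d\<in>{1..2*m}. if m < d then mangoldt d else (0::real)) = psi (2*m) - psi m"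
  proof -
    have "{1..2*m} = {1..m} \<union> {m<..2*m}" by auto
    hence "psi (2*m) = psi m + (\<Sum>d\<in>{m<..2*m}. mangoldt d)" unfolding psi_def
      by (metis (no_types) sum.union_disjoint finite_atLeastAtMost finite_greaterThanAtMost
          ivl_disj_int_two(8) Int_commute inf_sup_aci(1) disjoint_iff greaterThanAtMost_iff atLeastAtMost_iff not_less)
    moreover have "(\<Sum>d\<in>{1..2*m}. if m < d then mangoldt d else (0::real)) = (\<Sum>d\<in>{m<..2*m}. mangoldt d)"
      by (subst sum.inter_filter[symmetric]) (auto intro!: sum.cong)
    ultimately show ?thesis by simp
  qed
  ultimately show ?thesis by simp
qed

lemma psi_le: "psi n \<le> 4 * real n"
proof (induction n rule: less_induct)
  case (less n)
  show ?case
  proof (cases "n = 0")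
    case True thus ?thesis by (simp add: psi_def)
  next
    case False
    have "\<exists>m. n = 2*m \<or> n = 2*m+1" by presburger
    then obtain m where m: "n = 2*m \<or> n = 2*m+1" by blast
    have ln2: "ln (2::real) \<le> 1" using ln_le_minus_one[of 2] by simp
    show ?thesis
    proof (cases "n = 2*m")
      case True
      hence "m < n" using False by simp
      hence "psi m \<le> 4 * real m" using less by simp
      moreover have "2*real m*ln 2 \<le> 2*real m" using ln2 by (simp add: mult_left_le)
      ultimately show ?thesis using psi_double[of m] True by simp
    next
      case F: False
      hence n: "n = 2*m+1" using m by simp
      have "m < n" using n by simp
      hence "psi m \<le> 4 * real m" using less by simp
      moreover have "psi n = psi (2*m) + mangoldt (2*m+1)" using n unfolding psi_def by simp
      moreover have "mangoldt (2*m+1) \<le> ln (real (2*m+1))" by (rule mangoldt_le) simp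
      moreover have "ln (real (2*m+1)) \<le> real (2*m)" using ln_le_minus_one[of "real (2*m+1)"] by simp
      moreover have "2*real m*ln 2 \<le> 2*real m" using ln2 by (simp add: mult_left_le)
      moreover have "real n = 2*real m + 1" using n by simp
      ultimately show ?thesis using psi_double[of m] by linarith
    qed
  qed
qed


lemma fact_le_pow: "(fact n :: real) \<le> real n ^ n"
proof (induction n)
  case (Suc n)
  have "(fact (Suc n)::real) = real (Suc n) * fact n" by simp
  also have "\<dots> \<le> real (Suc n) * real n ^ n" using Suc by (intro mult_left_mono) auto
  also have "\<dots> \<le> real (Suc n) * real (Suc n) ^ n" by (intro mult_left_mono power_mono) auto
  finally show ?case by simp
qed simp

lemma pow_le_exp_fact: "real n ^ n \<le> exp (real n) * fact n"
proof (induction n)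
  case (Suc n)
  show ?case
  proof (cases "n = 0")
    case True thus ?thesis by (simp add: exp_ge_add_one_self[of 1, simplified] )
  next
    case False
    hence n: "real n > 0" by simp
    have "1 + 1 / real n \<le> exp (1 / real n)" by (rule exp_ge_add_one_self)
    hence "real (Suc n) \<le> real n * exp (1 / real n)" using n by (simp add: field_simps)
    hence "real (Suc n) ^ n \<le> (real n * exp (1 / real n)) ^ n" by (intro power_mono) auto
    also have "\<dots> = real n ^ n * exp 1"
      using n by (simp add: power_mult_distrib exp_of_nat_mult[symmetric])
    also have "\<dots> \<le> exp (real n) * fact n * exp 1" using Suc by (intro mult_right_mono) auto
    finally have A: "real (Suc n) ^ n \<le> exp (real n) * fact n * exp 1" .
    have "real (Suc n) ^ Suc n = real (Suc n) * real (Suc n) ^ n" by simp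
    also have "\<dots> \<le> real (Suc n) * (exp (real n) * fact n * exp 1)" using A by (intro mult_left_mono) auto
    also have "\<dots> = exp (real (Suc n)) * fact (Suc n)" by (simp add: exp_add algebra_simps)
    finally show ?thesis .
  qed
qed simp

lemma ln_fact_lower: "real n * ln (real n) - real n \<le> ln (fact n)"
proof (cases "n = 0")
  case False
  have "ln (real n ^ n) \<le> ln (exp (real n) * fact n)"
    using pow_le_exp_fact[of n] False by (subst ln_le_cancel_iff) auto
  thus ?thesis using False by (simp add: ln_mult ln_realpow)
qed simp

lemma ln_fact_upper: "ln (fact n) \<le> real n * ln (real n)"
proof (cases "n = 0")
  case False
  have "ln (fact n) \<le> ln (real n ^ n)"
    using fact_le_pow[of n] False by (subst ln_le_cancel_iff) auto
  thus ?thesis using False by (simp add: ln_realpow)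
qed simp

definition SL :: "nat \<Rightarrow> real" where "SL n = (\<Sum>d\<in>{1..n}. mangoldt d / real d)"

lemma SL_lower: "n \<ge> 1 \<Longrightarrow> ln (real n) - 1 \<le> SL n"
proof -
  assume n: "n \<ge> 1"
  have "ln (fact n) = (\<Sum>d\<in>{1..n}. mangoldt d * real (n div d))" by (rule ln_fact_mangoldt)
  also have "\<dots> \<le> (\<Sum>d\<in>{1..n}. mangoldt d * (real n / real d))"
    by (intro sum_mono mult_left_mono div_real_le mangoldt_nonneg) auto
  also have "\<dots> = real n * SL n" unfolding SL_def by (simp add: sum_distrib_left field_simps)
  finally have "real n * ln (real n) - real n \<le> real n * SL n" using ln_fact_lower[of n] by linarith
  hence "real n * (ln (real n) - 1) \<le> real n * SL n" by (simp add: algebra_simps)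
  thus ?thesis using n by (simp add: mult_le_cancel_left_pos)
qed

lemma SL_upper: "n \<ge> 1 \<Longrightarrow> SL n \<le> ln (real n) + 4"
proof -
  assume n: "n \<ge> 1"
  have "(\<Sum>d\<in>{1..n}. mangoldt d * (real n / real d - 1)) = (\<Sum>d\<in>{1..n}. real n * (mangoldt d / real d) - mangoldt d)"
    by (intro sum.cong refl) (simp add: right_diff_distrib)
  also have "\<dots> = real n * SL n - psi n"
    unfolding SL_def psi_def by (simp add: sum_distrib_left sum_subtractf)
  finally have "real n * SL n - psi n = (\<Sum>d\<in>{1..n}. mangoldt d * (real n / real d - 1))" by simp
  also have "\<dots> \<le> (\<Sum>d\<in>{1..n}. mangoldt d * real (n div d))"
    by (intro sum_mono mult_left_mono div_real_ge mangoldt_nonneg) auto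
  also have "\<dots> = ln (fact n)" by (rule ln_fact_mangoldt[symmetric])
  also have "\<dots> \<le> real n * ln (real n)" by (rule ln_fact_upper)
  finally have "real n * SL n \<le> real n * ln (real n) + 4 * real n" using psi_le[of n] by linarith
  hence "real n * SL n \<le> real n * (ln (real n) + 4)" by (simp add: algebra_simps)
  thus ?thesis using n by (simp add: mult_le_cancel_left_pos)
qed

definition SP :: "nat \<Rightarrow> real" where "SP n = (\<Sum>p\<in>{p. prime p \<and> p \<le> n}. ln (real p) / real p)"

lemma finite_primes_le [simp]: "finite {p::nat. prime p \<and> p \<le> n}" by simp

lemma SP_le_SL: "SP n \<le> SL n"
proof -
  have "SP n = (\<Sum>p\<in>{p. prime p \<and> p \<le> n}. mangoldt p / real p)"
    unfolding SP_def by (intro sum.cong) auto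
  also have "\<dots> \<le> SL n" unfolding SL_def
    by (intro sum_mono2) (auto simp: mangoldt_nonneg dest: prime_gt_0_nat)
  finally show ?thesis .
qed

lemma telesc: "n \<ge> 1 \<Longrightarrow> (\<Sum>j\<in>{2..n}. ln (real j) / (real j * (real j - 1))) \<le> 2 - (ln (real n) + 2) / real n"
proof (induction n rule: dec_induct)
  case base thus ?case by simp
next
  case (step n)
  have n: "real n \<ge> 1" using step by simp
  have l: "ln (real n + 1) - ln (real n) \<le> 1 / real n"
  proof -
    have "ln (real n + 1) - ln (real n) = ln ((real n + 1) / real n)" using n by (simp add: ln_div)
    also have "\<dots> \<le> (real n + 1) / real n - 1" using n by (intro ln_le_minus_one) auto
    also have "\<dots> = 1 / real n" using n by (simp add: field_simps)
    finally show ?thesis .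
  qed
  have key: "(real n + 1) * (ln (real n + 1) - ln (real n)) \<le> 2"
  proof -
    have "(real n + 1) * (ln (real n + 1) - ln (real n)) \<le> (real n + 1) * (1 / real n)"
      using l n by (intro mult_left_mono) auto
    also have "\<dots> \<le> 2" using n by (simp add: field_simps)
    finally show ?thesis .
  qed
  have "(\<Sum>j\<in>{2..Suc n}. ln (real j) / (real j * (real j - 1))) =
        (\<Sum>j\<in>{2..n}. ln (real j) / (real j * (real j - 1))) + ln (real n + 1) / ((real n + 1) * real n)"
    using step by (subst sum.cl_ivl_Suc) (auto simp: add_ac)
  also have "\<dots> \<le> 2 - (ln (real n) + 2) / real n + ln (real n + 1) / ((real n + 1) * real n)"
    using step by simp
  also have "\<dots> \<le> 2 - (ln (real (Suc n)) + 2) / real (Suc n)"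
  proof -
    define A where "A = ln (real n + 1)"
    define B where "B = ln (real n)"
    define N where "N = real n"
    have N: "N \<ge> 1" using n N_def by simp
    have "A + N*(A+2) \<le> (B+2)*(N+1)" using key unfolding A_def B_def N_def by (simp add: algebra_simps)
    hence "(A + N*(A+2))/(N*(N+1)) \<le> (B+2)*(N+1)/(N*(N+1))" using N by (intro divide_right_mono) auto
    moreover have "(A + N*(A+2))/(N*(N+1)) = A / ((N + 1) * N) + (A + 2) / (N + 1)"
      using N by (simp add: divide_simps)
    moreover have "(B+2)*(N+1)/(N*(N+1)) = (B+2)/N" using N by (simp add: divide_simps)
    ultimately have "ln (real n + 1) / ((real n + 1) * real n) + (ln (real n + 1) + 2) / (real n + 1) \<le> (ln (real n) + 2) / real n"
      unfolding A_def B_def N_def by simp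
    thus ?thesis by (simp add: add_ac)
  qed
  finally show ?case .
qed

lemma geom_tail: "prime (p::nat) \<Longrightarrow> (\<Sum>k\<in>{2..n}. (1 / real p) ^ k) \<le> 1 / (real p * (real p - 1))"
proof -
  assume p: "prime p"
  hence p2: "real p \<ge> 2" using prime_ge_2_nat by auto
  define q where "q = 1 / real p"
  have q: "0 < q" "q \<le> 1/2" using p2 unfolding q_def by (auto simp: field_simps)
  show ?thesis
  proof (cases "n < 2")
    case True thus ?thesis using p2 by simp
  next
    case False
    have "(\<Sum>k\<in>{2..n}. q ^ k) = (q^2 - q ^ Suc n) / (1 - q)"
      using False q by (subst sum_gp) auto
    also have "\<dots> \<le> q^2 / (1 - q)" using q by (intro divide_right_mono) auto
    also have "\<dots> = 1 / (real p * (real p - 1))" using p2 unfolding q_def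
      by (simp add: divide_simps power2_eq_square)
    finally show ?thesis unfolding q_def .
  qed
qed

lemma SL_le_SP: "SL n \<le> SP n + 2"
proof -
  define PR where "PR = {p. prime p \<and> p \<le> n}"
  define D where "D = {1..n} - PR"
  define g where "g = (\<lambda>d. mangoldt d / real d :: real)"
  have g0: "g d \<ge> 0" for d unfolding g_def by (simp add: mangoldt_nonneg)
  have PRsub: "PR \<subseteq> {1..n}" unfolding PR_def by (auto dest: prime_gt_0_nat)
  have "SL n = (\<Sum>d\<in>PR. g d) + (\<Sum>d\<in>D. g d)"
    unfolding SL_def D_def g_def using PRsub by (subst sum.subset_diff[of PR]) auto
  moreover have "(\<Sum>d\<in>PR. g d) = SP n"
    unfolding SP_def PR_def g_def by (intro sum.cong) auto
  ultimately have SLeq: "SL n = SP n + (\<Sum>d\<in>D. g d)" by simp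
  define Q where "Q = Sigma PR (\<lambda>_. {2..n})"
  define f where "f = (\<lambda>(p,k). p ^ k :: nat)"
  have finQ: "finite Q" unfolding Q_def PR_def by auto
  have injf: "inj_on f Q" unfolding inj_on_def Q_def PR_def f_def
    by (auto simp: prime_power_inj'')
  have zero: "g d = 0" if "d \<in> D - f ` Q" for d
  proof (rule ccontr)
    assume nz: "g d \<noteq> 0"
    hence "primepow d" unfolding g_def mangoldt_def by (auto split: if_splits)
    then obtain p k where pk: "prime p" "k > 0" "d = p ^ k" unfolding primepow_def by blast
    have dD: "d \<in> {1..n}" "\<not> prime d" using that unfolding D_def PR_def by auto
    have "k \<noteq> 1" using pk dD by auto
    hence k2: "k \<ge> 2" using pk by simp
    have "p ^ 1 \<le> p ^ k" using pk by (intro power_increasing) (auto dest: prime_gt_0_nat)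
    hence pn: "p \<le> n" using pk dD by simp
    have "k < 2 ^ k" by (rule less_exp)
    also have "2 ^ k \<le> p ^ k" using pk by (intro power_mono) (auto simp: prime_ge_2_nat)
    finally have "k \<le> n" using pk dD by simp
    hence "(p,k) \<in> Q" unfolding Q_def PR_def using pk pn k2 by auto
    hence "d \<in> f ` Q" using pk unfolding f_def by force
    thus False using that by simp
  qed
  have "(\<Sum>d\<in>D. g d) = (\<Sum>d\<in>D \<inter> f ` Q. g d)"
  proof (rule sum.mono_neutral_right)
    show "finite D" by (simp add: D_def)
    show "\<forall>i\<in>D - D \<inter> f ` Q. g i = 0" using zero by blast
  qed auto
  also have "\<dots> \<le> (\<Sum>d\<in>f ` Q. g d)" using finQ g0 by (intro sum_mono2) auto
  also have "\<dots> = (\<Sum>q\<in>Q. g (f q))" using injf by (simp add: sum.reindex)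
  also have "\<dots> = (\<Sum>p\<in>PR. \<Sum>k\<in>{2..n}. ln (real p) * (1 / real p) ^ k)"
  proof -
    have "(\<Sum>q\<in>Q. g (f q)) = (\<Sum>(p,k)\<in>PR \<times> {2..n}. ln (real p) * (1 / real p) ^ k)"
      unfolding Q_def by (intro sum.cong refl)
         (auto simp: PR_def f_def g_def power_one_over divide_inverse power_inverse)
    also have "\<dots> = (\<Sum>p\<in>PR. \<Sum>k\<in>{2..n}. ln (real p) * (1 / real p) ^ k)"
      by (rule sum.cartesian_product[symmetric])
    finally show ?thesis .
  qed
  also have "\<dots> \<le> (\<Sum>p\<in>PR. ln (real p) / (real p * (real p - 1)))"
  proof (intro sum_mono)
    fix p assume "p \<in> PR"
    hence p: "prime p" unfolding PR_def by simp
    have "(\<Sum>k\<in>{2..n}. ln (real p) * (1 / real p) ^ k) = ln (real p) * (\<Sum>k\<in>{2..n}. (1 / real p) ^ k)"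
      by (simp add: sum_distrib_left)
    also have "\<dots> \<le> ln (real p) * (1 / (real p * (real p - 1)))"
      using p geom_tail[OF p, of n] by (intro mult_left_mono) (auto dest: prime_gt_0_nat)
    finally show "(\<Sum>k\<in>{2..n}. ln (real p) * (1 / real p) ^ k) \<le> ln (real p) / (real p * (real p - 1))"
      by simp
  qed
  also have "\<dots> \<le> (\<Sum>j\<in>{2..n}. ln (real j) / (real j * (real j - 1)))"
    unfolding PR_def by (intro sum_mono2) (auto dest: prime_ge_2_nat)
  also have "\<dots> \<le> 2"
  proof (cases "n = 0")
    case False
    hence "n \<ge> 1" by simp
    from telesc[OF this] show ?thesis using \<open>n \<ge> 1\<close>
      by (smt (verit) divide_nonneg_pos ln_ge_zero of_nat_0_less_iff of_nat_1 of_nat_le_iff)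
  qed simp
  finally show ?thesis using SLeq by simp
qed


definition TP :: "real \<Rightarrow> real \<Rightarrow> real" where
  "TP u v = (\<Sum>p\<in>{p. prime p \<and> u < real p \<and> real p \<le> v}. ln (real p) / real p)"

lemma le_floor_iff: "0 \<le> v \<Longrightarrow> (real p \<le> v) = (p \<le> nat \<lfloor>v\<rfloor>)"
  by (metis le_nat_floor of_nat_floor order_trans of_nat_le_iff)

lemma floor_half: assumes "1 \<le> v" shows "v / 2 \<le> real (nat \<lfloor>v\<rfloor>)" "real (nat \<lfloor>v\<rfloor>) \<le> v" "1 \<le> nat \<lfloor>v\<rfloor>"
proof -
  have a0: "real_of_int \<lfloor>v\<rfloor> > v - 1" by (rule real_of_int_floor_gt_diff_one)
  have a1: "real (nat \<lfloor>v\<rfloor>) = real_of_int \<lfloor>v\<rfloor>" by (rule of_nat_int_floor) (use assms in simp)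
  have a: "real (nat \<lfloor>v\<rfloor>) > v - 1" using a0 a1 by linarith
  show c: "1 \<le> nat \<lfloor>v\<rfloor>" by (rule le_nat_floor) (use assms in simp)
  show "real (nat \<lfloor>v\<rfloor>) \<le> v" using assms by (intro of_nat_floor) simp
  have "real (nat \<lfloor>v\<rfloor>) \<ge> 1" using c by simp
  thus "v / 2 \<le> real (nat \<lfloor>v\<rfloor>)" using a by simp
qed

lemma ln_floor: assumes "1 \<le> v" shows "ln v - 1 \<le> ln (real (nat \<lfloor>v\<rfloor>))" "ln (real (nat \<lfloor>v\<rfloor>)) \<le> ln v"
proof -
  note f = floor_half[OF assms]
  have p: "real (nat \<lfloor>v\<rfloor>) > 0" using f(1) assms by linarith
  show "ln (real (nat \<lfloor>v\<rfloor>)) \<le> ln v" using f p by (subst ln_le_cancel_iff) auto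
  have "ln (v/2) \<le> ln (real (nat \<lfloor>v\<rfloor>))" using f p assms by (subst ln_le_cancel_iff) auto
  moreover have "ln (v/2) = ln v - ln 2" using assms by (simp add: ln_div)
  moreover have "ln (2::real) \<le> 1" using ln_le_minus_one[of 2] by simp
  ultimately show "ln v - 1 \<le> ln (real (nat \<lfloor>v\<rfloor>))" by linarith
qed

lemma TP_eq: assumes "0 \<le> u" "u \<le> v" shows "TP u v = SP (nat \<lfloor>v\<rfloor>) - SP (nat \<lfloor>u\<rfloor>)"
proof -
  have mono: "nat \<lfloor>u\<rfloor> \<le> nat \<lfloor>v\<rfloor>" using assms by (simp add: floor_mono nat_mono)
  have "{p. prime p \<and> p \<le> nat \<lfloor>v\<rfloor>} = {p. prime p \<and> p \<le> nat \<lfloor>u\<rfloor>} \<union> {p. prime p \<and> u < real p \<and> real p \<le> v}"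
    using assms le_floor_iff[of u] le_floor_iff[of v] mono by (auto simp: not_le[symmetric])
  moreover have "{p. prime p \<and> p \<le> nat \<lfloor>u\<rfloor>} \<inter> {p. prime p \<and> u < real p \<and> real p \<le> v} = {}"
    using assms le_floor_iff[of u] by (auto simp: not_le[symmetric])
  moreover have "finite {p. prime p \<and> u < real p \<and> real p \<le> v}"
    by (rule finite_subset[of _ "{..nat \<lfloor>v\<rfloor>}"]) (use assms le_floor_iff[of v] in auto)
  ultimately have "SP (nat \<lfloor>v\<rfloor>) = SP (nat \<lfloor>u\<rfloor>) + TP u v"
    unfolding SP_def TP_def by (simp add: sum.union_disjoint)
  thus ?thesis by simp
qed

lemma TP_lower: assumes "1 \<le> u" "u \<le> v" shows "ln v - ln u - 8 \<le> TP u v"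
proof -
  have v: "1 \<le> v" using assms by simp
  have "SP (nat \<lfloor>v\<rfloor>) \<ge> SL (nat \<lfloor>v\<rfloor>) - 2" using SL_le_SP[of "nat \<lfloor>v\<rfloor>"] by linarith
  moreover have "SL (nat \<lfloor>v\<rfloor>) \<ge> ln (real (nat \<lfloor>v\<rfloor>)) - 1" using SL_lower floor_half(3)[OF v] by simp
  moreover have "SP (nat \<lfloor>u\<rfloor>) \<le> ln (real (nat \<lfloor>u\<rfloor>)) + 4"
    using SP_le_SL SL_upper floor_half(3)[OF assms(1)] order_trans by blast
  ultimately show ?thesis using TP_eq[of u v] assms ln_floor[OF v] ln_floor[OF assms(1)] by linarith
qed

lemma TP_upper: assumes "1 \<le> u" "u \<le> v" shows "TP u v \<le> ln v - ln u + 8"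
proof -
  have v: "1 \<le> v" using assms by simp
  have "SP (nat \<lfloor>u\<rfloor>) \<ge> SL (nat \<lfloor>u\<rfloor>) - 2" using SL_le_SP[of "nat \<lfloor>u\<rfloor>"] by linarith
  moreover have "SL (nat \<lfloor>u\<rfloor>) \<ge> ln (real (nat \<lfloor>u\<rfloor>)) - 1" using SL_lower floor_half(3)[OF assms(1)] by simp
  moreover have "SP (nat \<lfloor>v\<rfloor>) \<le> ln (real (nat \<lfloor>v\<rfloor>)) + 4"
    using SP_le_SL SL_upper floor_half(3)[OF v] order_trans by blast
  ultimately show ?thesis using TP_eq[of u v] assms ln_floor[OF v] ln_floor[OF assms(1)] by linarith
qed


definition Iz :: "real \<Rightarrow> nat set" where "Iz z = {m. 1 \<le> m \<and> real m \<le> z}"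

lemma finite_Iz [simp]: "finite (Iz z)"
  by (rule finite_subset[of _ "{..nat \<lfloor>z\<rfloor>}"]) (auto simp: Iz_def le_nat_floor)

definition Fp :: "real \<Rightarrow> nat \<times> nat \<Rightarrow> real" where
  "Fp x = (\<lambda>(m1, m2). t_fun x m1 * t_fun x m2 * real m1 * real m2 / real (max m1 m2) ^ 3)"

definition Cop :: "real \<Rightarrow> (nat \<times> nat) set" where
  "Cop z = {(m1, m2). 1 \<le> m1 \<and> real m1 \<le> z \<and> 1 \<le> m2 \<and> real m2 \<le> z \<and> coprime m1 m2}"

lemma Cop_sub: "Cop z \<subseteq> Iz z \<times> Iz z" by (auto simp: Cop_def Iz_def)

lemma finite_Cop [simp]: "finite (Cop z)"
  by (rule finite_subset[OF Cop_sub]) simp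

lemma Fp_nonneg: "0 \<le> lam x \<Longrightarrow> 0 \<le> Fp x q"
  unfolding Fp_def by (cases q) (auto intro!: divide_nonneg_nonneg mult_nonneg_nonneg t_fun_nonneg)

lemma gcd_decomp:
  assumes lam: "0 \<le> lam x"
  shows "sum (Fp x) (Iz z \<times> Iz z) \<le> (\<Sum>d\<in>Iz z. t_fun x d ^ 2 / real d) * sum (Fp x) (Cop z)"
proof -
  define Sup where "Sup = {q \<in> Iz z \<times> Iz z. t_fun x (fst q) \<noteq> 0 \<and> t_fun x (snd q) \<noteq> 0}"
  define \<phi> where "\<phi> = (\<lambda>(m1::nat, m2::nat). (gcd m1 m2, (m1 div gcd m1 m2, m2 div gcd m1 m2)))"
  define H where "H = (\<lambda>(d::nat, q). t_fun x d ^ 2 / real d * Fp x q)"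
  have finS: "finite Sup" unfolding Sup_def by (rule finite_subset[of _ "Iz z \<times> Iz z"]) auto
  have H0: "0 \<le> H q" for q unfolding H_def using Fp_nonneg[OF lam]
    by (cases q) (auto intro!: mult_nonneg_nonneg divide_nonneg_nonneg)
  have "sum (Fp x) (Iz z \<times> Iz z) = sum (Fp x) Sup"
    by (rule sum.mono_neutral_right) (auto simp: Sup_def Fp_def)
  also have "\<dots> = sum (H \<circ> \<phi>) Sup"
  proof (rule sum.cong[OF refl])
    fix q assume q: "q \<in> Sup"
    obtain m1 m2 where q12: "q = (m1, m2)" by (cases q)
    have m: "m1 \<ge> 1" "m2 \<ge> 1" "t_fun x m1 \<noteq> 0" "t_fun x m2 \<noteq> 0"
      using q unfolding Sup_def Iz_def q12 by auto
    define d where "d = gcd m1 m2"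
    define n1 where "n1 = m1 div d"
    define n2 where "n2 = m2 div d"
    have d0: "d > 0" using m unfolding d_def by simp
    have e1: "m1 = d * n1" unfolding n1_def d_def by simp
    have e2: "m2 = d * n2" unfolding n2_def d_def by simp
    have n0: "n1 > 0" "n2 > 0" using e1 e2 m by (auto intro: Nat.gr0I)
    have c1: "coprime d n1" unfolding n1_def using t_fun_nz_coprime[OF m(3)] m unfolding d_def by simp
    have c2: "coprime d n2" unfolding n2_def using t_fun_nz_coprime[OF m(4)] m unfolding d_def by simp
    have t1: "t_fun x m1 = t_fun x d * t_fun x n1" using e1 c1 d0 n0 t_fun_mult by simp
    have t2: "t_fun x m2 = t_fun x d * t_fun x n2" using e2 c2 d0 n0 t_fun_mult by simp
    have mx0: "max m1 m2 = d * max n1 n2" using e1 e2 nat_mult_max_right by metis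
    have mx: "real (max m1 m2) = real d * real (max n1 n2)" unfolding mx0 by simp
    have M0: "real (max n1 n2) > 0" using n0 by simp
    have "\<phi> q = (d, (n1, n2))" unfolding \<phi>_def q12 d_def n1_def n2_def by simp
    hence "(H \<circ> \<phi>) q = t_fun x d ^ 2 / real d * (t_fun x n1 * t_fun x n2 * real n1 * real n2 / real (max n1 n2) ^ 3)"
      unfolding H_def Fp_def by simp
    also have "\<dots> = Fp x q"
    proof -
      have rm1: "real m1 = real d * real n1" using e1 by simp
      have rm2: "real m2 = real d * real n2" using e2 by simp
      have "Fp x q = t_fun x m1 * t_fun x m2 * real m1 * real m2 / real (max m1 m2) ^ 3"
        unfolding Fp_def q12 by simp
      also have "\<dots> = (t_fun x d * t_fun x n1) * (t_fun x d * t_fun x n2) * (real d * real n1) * (real d * real n2)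
            / (real d * real (max n1 n2)) ^ 3" unfolding t1 t2 mx rm1 rm2 ..
      also have "\<dots> = t_fun x d ^ 2 / real d * (t_fun x n1 * t_fun x n2 * real n1 * real n2 / real (max n1 n2) ^ 3)"
        using d0 M0 by (simp add: field_simps power2_eq_square power3_eq_cube)
      finally show ?thesis by simp
    qed
    finally show "Fp x q = (H \<circ> \<phi>) q" by simp
  qed
  also have "\<dots> = sum H (\<phi> ` Sup)"
  proof (rule sum.reindex[symmetric])
    show "inj_on \<phi> Sup"
    proof (rule inj_onI)
      fix q q' assume "q \<in> Sup" "q' \<in> Sup" "\<phi> q = \<phi> q'"
      thus "q = q'" unfolding \<phi>_def
        by (cases q, cases q') (auto, metis dvd_mult_div_cancel gcd_dvd1, metis dvd_mult_div_cancel gcd_dvd2)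
    qed
  qed
  also have "\<dots> \<le> sum H (Iz z \<times> Cop z)"
  proof (rule sum_mono2)
    show "finite (Iz z \<times> Cop z)" by simp
    show "\<phi> ` Sup \<subseteq> Iz z \<times> Cop z"
    proof
      fix w assume "w \<in> \<phi> ` Sup"
      then obtain m1 m2 where q: "(m1, m2) \<in> Sup" "w = \<phi> (m1, m2)" by auto
      have m: "m1 \<ge> 1" "m2 \<ge> 1" "real m1 \<le> z" "real m2 \<le> z" using q unfolding Sup_def Iz_def by auto
      define d where "d = gcd m1 m2"
      have d0: "d > 0" "d \<le> m1" using m unfolding d_def by (auto intro: dvd_imp_le)
      have l1: "m1 div d \<le> m1" "m2 div d \<le> m2" by auto
      have g1: "m1 div d \<ge> 1" "m2 div d \<ge> 1" using m d0 unfolding d_def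
        by (auto simp: div_greater_zero_iff Suc_le_eq intro!: dvd_imp_le)
      have cp: "coprime (m1 div d) (m2 div d)" unfolding d_def using m by (intro div_gcd_coprime) auto
      have r1: "real (m1 div d) \<le> real m1" "real (m2 div d) \<le> real m2" "real d \<le> real m1"
        using l1 d0 by auto
      have "real d \<le> z" "real (m1 div d) \<le> z" "real (m2 div d) \<le> z"
        using m r1 by linarith+
      moreover have d1: "Suc 0 \<le> gcd m1 m2" using d0(1) unfolding d_def by (simp only: Suc_le_eq)
      ultimately show "w \<in> Iz z \<times> Cop z" using q(2) g1 cp unfolding \<phi>_def Iz_def Cop_def d_def by auto
    qed
  qed (rule H0)
  also have "\<dots> = (\<Sum>d\<in>Iz z. t_fun x d ^ 2 / real d) * sum (Fp x) (Cop z)"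
    unfolding H_def by (simp add: sum.cartesian_product[symmetric] sum_product)
  finally show ?thesis .
qed

lemma sum_mult_le_prod:
  fixes h f :: "nat \<Rightarrow> real"
  assumes "finite D" "finite Q" "\<And>p. p \<in> Q \<Longrightarrow> prime p" "\<And>p. p \<in> Q \<Longrightarrow> 0 \<le> f p"
    and "\<And>d. d \<in> D \<Longrightarrow> h d \<noteq> 0 \<Longrightarrow> d > 0 \<and> prime_factors d \<subseteq> Q \<and> d = \<Prod>(prime_factors d) \<and> h d = (\<Prod>p\<in>prime_factors d. f p)"
  shows "sum h D \<le> (\<Prod>p\<in>Q. 1 + f p)"
proof -
  define Dn where "Dn = {d\<in>D. h d \<noteq> 0}"
  have "sum h D = sum h Dn" unfolding Dn_def by (rule sum.mono_neutral_right) (use assms in auto)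
  also have "\<dots> = sum (\<lambda>d. \<Prod>p\<in>prime_factors d. f p) Dn"
    by (rule sum.cong) (use assms in \<open>auto simp: Dn_def\<close>)
  also have "\<dots> = sum (\<lambda>A. \<Prod>p\<in>A. f p) (prime_factors ` Dn)"
  proof (rule sum.reindex[symmetric, unfolded comp_def])
    show "inj_on prime_factors Dn"
    proof (rule inj_onI)
      fix a b assume "a \<in> Dn" "b \<in> Dn" "prime_factors a = prime_factors b"
      thus "a = b" using assms(5) unfolding Dn_def by (metis (mono_tags, lifting) mem_Collect_eq)
    qed
  qed
  also have "\<dots> \<le> sum (\<lambda>A. \<Prod>p\<in>A. f p) (Pow Q)"
  proof (rule sum_mono2)
    show "finite (Pow Q)" using assms by simp
    show "prime_factors ` Dn \<subseteq> Pow Q" using assms(5) unfolding Dn_def by auto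
    fix A assume "A \<in> Pow Q - prime_factors ` Dn"
    thus "0 \<le> (\<Prod>p\<in>A. f p)" using assms(4) by (auto intro: prod_nonneg)
  qed
  also have "\<dots> = (\<Prod>p\<in>Q. f p + 1)" using prod_add[of Q f "\<lambda>_. 1"] assms by simp
  finally show ?thesis by (simp add: add_ac)
qed

lemma tel2: assumes "2 \<le> N" shows "(\<Sum>n\<in>{N..M}. 1 / (real n * (real n - 1))) \<le> 1 / (real N - 1)"
proof (cases "N \<le> M")
  case True
  have "(\<Sum>n\<in>{N..M}. 1 / (real n * (real n - 1))) = 1 / (real N - 1) - 1 / real M"
    using True
  proof (induction M rule: dec_induct)
    case base
    have "real N - 1 > 0" using assms by simp
    thus ?case using assms by (simp add: divide_simps)
  next
    case (step M)
    have M: "real M \<ge> 2" using step assms by simp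
    have "(\<Sum>n\<in>{N..Suc M}. 1 / (real n * (real n - 1))) = 1 / (real N - 1) - 1 / real M + 1 / ((real M + 1) * real M)"
      using step by (simp add: sum.cl_ivl_Suc)
    also have "\<dots> = 1 / (real N - 1) - 1 / real (Suc M)" using M by (simp add: divide_simps) (simp add: algebra_simps)
    finally show ?case .
  qed
  thus ?thesis by simp
qed (use assms in simp)


lemma tp_nonneg: "0 \<le> lam x \<Longrightarrow> 0 \<le> t_pp x p 1" by (rule t_pp_nonneg)

lemma tp_le_r: "0 \<le> lam x \<Longrightarrow> t_pp x p 1 \<le> r_pp x p 1"
proof -
  assume l: "0 \<le> lam x"
  have r: "0 \<le> r_pp x p 1" using r_pp_nonneg[OF l] .
  have pos: "0 < 1 + (r_pp x p 1)^2" by (simp add: add_pos_nonneg)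
  have "r_pp x p 1 / (1 + (r_pp x p 1)^2) \<le> r_pp x p 1 / 1"
    using r pos by (intro divide_left_mono) auto
  thus ?thesis unfolding t_pp_def by simp
qed

lemma r_le: "0 \<le> lam x \<Longrightarrow> r_pp x p 1 \<le> lam x / (sqrt (real p) * ln (real p))"
  unfolding r_pp_def using divide_nonneg_nonneg[of "lam x" "sqrt (real p) * ln (real p)"]
  by (cases "p = 0") (auto simp: ln_ge_zero)

lemma tp_sq_bound:
  assumes l: "0 \<le> lam x" and p: "real p \<ge> 3"
  shows "t_pp x p 1 ^ 2 / real p \<le> lam x ^ 2 / (real p * (real p - 1))"
proof -
  have lnp: "ln (real p) \<ge> 1"
    using p exp_le by (subst ln_ge_iff) auto
  have sp: "sqrt (real p) > 0" using p by simp
  have "t_pp x p 1 \<le> lam x / (sqrt (real p) * ln (real p))"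
    using tp_le_r[OF l] r_le[OF l] by (rule order_trans)
  hence "t_pp x p 1 ^ 2 \<le> (lam x / (sqrt (real p) * ln (real p))) ^ 2"
    using tp_nonneg[OF l] by (intro power_mono) auto
  also have "\<dots> = lam x ^ 2 / (real p * ln (real p) ^ 2)"
    using p by (simp add: power_divide power_mult_distrib)
  also have "\<dots> \<le> lam x ^ 2 / (real p * 1)"
  proof -
    have "ln (real p) ^ 2 \<ge> 1" using lnp by (simp add: one_le_power)
    hence "real p * 1 \<le> real p * ln (real p) ^ 2" using p by (intro mult_left_mono) auto
    thus ?thesis using p by (intro divide_left_mono) auto
  qed
  finally have A: "t_pp x p 1 ^ 2 \<le> lam x ^ 2 / real p" by simp
  hence "t_pp x p 1 ^ 2 / real p \<le> lam x ^ 2 / real p / real p"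
    using p by (intro divide_right_mono) auto
  also have "\<dots> = lam x ^ 2 / (real p * real p)" by simp
  also have "\<dots> \<le> lam x ^ 2 / (real p * (real p - 1))"
  proof (rule divide_left_mono)
    show "real p * (real p - 1) \<le> real p * real p" using p by (intro mult_left_mono) auto
  qed (use p in auto)
  finally show ?thesis .
qed

lemma B_bound:
  assumes l: "0 \<le> lam x" and l3: "lam x ^ 2 \<ge> 3"
  shows "(\<Sum>d\<in>Iz z. t_fun x d ^ 2 / real d) \<le> exp 2"
proof -
  define Q where "Q = {p. prime p \<and> lam x ^ 2 \<le> real p \<and> real p \<le> z}"
  define f where "f = (\<lambda>p. t_pp x p 1 ^ 2 / real p)"
  have finQ: "finite Q" unfolding Q_def
    by (rule finite_subset[of _ "{..nat \<lfloor>z\<rfloor>}"]) (auto simp: le_nat_floor)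
  have f0: "0 \<le> f p" for p unfolding f_def by simp
  have "(\<Sum>d\<in>Iz z. t_fun x d ^ 2 / real d) \<le> (\<Prod>p\<in>Q. 1 + f p)"
  proof (rule sum_mult_le_prod)
    show "finite (Iz z)" "finite Q" by (simp, rule finQ)
    show "\<And>p. p \<in> Q \<Longrightarrow> prime p" unfolding Q_def by simp
    show "\<And>p. p \<in> Q \<Longrightarrow> 0 \<le> f p" by (rule f0)
    fix d assume d: "d \<in> Iz z" "t_fun x d ^ 2 / real d \<noteq> 0"
    have d1: "d > 0" "real d \<le> z" using d unfolding Iz_def by auto
    have tnz: "t_fun x d \<noteq> 0" using d by auto
    have deq: "d = \<Prod>(prime_factors d)" by (rule t_fun_nz_prod[OF tnz d1(1)])
    have sub: "prime_factors d \<subseteq> Q"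
    proof
      fix p assume p: "p \<in> prime_factors d"
      have "p \<le> d" using p d1 by (auto intro: dvd_imp_le simp: in_prime_factors_iff)
      hence "real p \<le> z" using d1 by (meson of_nat_le_iff order_trans)
      thus "p \<in> Q" using p t_fun_nz_D[OF tnz p] unfolding Q_def by auto
    qed
    have "t_fun x d = (\<Prod>p\<in>prime_factors d. t_pp x p 1)"
      by (subst deq) (rule t_fun_prod_primes, auto)
    moreover have "real d = (\<Prod>p\<in>prime_factors d. real p)" by (subst deq) (simp add: of_nat_prod)
    ultimately have "t_fun x d ^ 2 / real d = (\<Prod>p\<in>prime_factors d. f p)"
      unfolding f_def by (simp add: prod_power_distrib prod_dividef)
    thus "d > 0 \<and> prime_factors d \<subseteq> Q \<and> d = \<Prod>(prime_factors d) \<and> t_fun x d ^ 2 / real d = (\<Prod>p\<in>prime_factors d. f p)"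
      using d1 sub deq by simp
  qed
  also have "\<dots> \<le> exp (sum f Q)" by (rule prod_le_exp_sum) (rule f0)
  also have "sum f Q \<le> 2"
  proof -
    define N where "N = nat \<lceil>lam x ^ 2\<rceil>"
    have N: "real N \<ge> lam x ^ 2" unfolding N_def by (simp add: of_nat_ceiling real_nat_ceiling_ge)
    hence N2: "N \<ge> 2" using l3 by simp
    have "sum f Q \<le> (\<Sum>p\<in>Q. lam x ^ 2 / (real p * (real p - 1)))"
    proof (intro sum_mono)
      fix p assume "p \<in> Q"
      hence "real p \<ge> 3" using l3 unfolding Q_def by auto
      thus "f p \<le> lam x ^ 2 / (real p * (real p - 1))" unfolding f_def by (rule tp_sq_bound[OF l])
    qed
    also have "\<dots> \<le> (\<Sum>n\<in>{N..nat \<lfloor>z\<rfloor>}. lam x ^ 2 / (real n * (real n - 1)))"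
    proof (rule sum_mono2)
      show "Q \<subseteq> {N..nat \<lfloor>z\<rfloor>}" unfolding Q_def N_def
        by (auto simp: le_nat_floor nat_le_iff ceiling_le_iff)
      fix n assume "n \<in> {N..nat \<lfloor>z\<rfloor>} - Q"
      hence "real n \<ge> 2" using N2 by simp
      thus "0 \<le> lam x ^ 2 / (real n * (real n - 1))" by simp
    qed simp
    also have "\<dots> = lam x ^ 2 * (\<Sum>n\<in>{N..nat \<lfloor>z\<rfloor>}. 1 / (real n * (real n - 1)))"
      by (simp add: sum_distrib_left)
    also have "\<dots> \<le> lam x ^ 2 * (1 / (real N - 1))"
      by (intro mult_left_mono tel2 N2) simp
    also have "\<dots> \<le> 2"
    proof -
      have "real N - 1 \<ge> lam x ^ 2 / 2" using N l3 by linarith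
      moreover have "0 < lam x ^ 2 / 2" using l3 by linarith
      moreover have "real N - 1 > 0" using N l3 by linarith
      ultimately have "lam x ^ 2 / (real N - 1) \<le> lam x ^ 2 / (lam x ^ 2 / 2)"
        by (intro divide_left_mono mult_pos_pos) auto
      also have "\<dots> = 2" using \<open>0 < lam x ^ 2 / 2\<close> by simp
      finally show ?thesis by simp
    qed
    finally show ?thesis .
  qed
  hence "exp (sum f Q) \<le> exp 2" by simp
  finally show ?thesis .
qed


definition blk :: "nat \<Rightarrow> nat" where "blk m = nat \<lfloor>log 2 (real m)\<rfloor>"

lemma blk_bounds: assumes "m \<ge> 1" shows "2 ^ blk m \<le> m" "m < 2 ^ (blk m + 1)"
proof -
  have "\<lfloor>log 2 (real m)\<rfloor> \<ge> 0" using assms by simp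
  hence e: "\<lfloor>log (real 2) (real m)\<rfloor> = int (blk m)" unfolding blk_def by simp
  have "2 ^ blk m \<le> m \<and> m < 2 ^ (blk m + 1)"
    using floor_log_nat_eq_powr_iff[of 2 m "blk m"] e assms by simp
  thus "2 ^ blk m \<le> m" "m < 2 ^ (blk m + 1)" by auto
qed

lemma blk_max: assumes "m1 \<ge> 1" "m2 \<ge> 1" "blk m1 = blk m2"
  shows "max m1 m2 \<le> 2 * min m1 m2"
proof -
  have a: "2 ^ blk m1 \<le> m1" "m1 < 2 ^ (blk m1 + 1)" using blk_bounds assms(1) by auto
  have b: "2 ^ blk m1 \<le> m2" "m2 < 2 ^ (blk m1 + 1)" using blk_bounds[OF assms(2)] assms(3) by auto
  have "max m1 m2 < 2 * 2 ^ blk m1" using a b by (simp add: max_def)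
  moreover have "2 ^ blk m1 \<le> min m1 m2" using a b by (simp add: min_def)
  ultimately show ?thesis by linarith
qed

lemma pair_bound:
  assumes l: "0 \<le> lam x" and m: "m1 \<ge> 1" "m2 \<ge> 1" "blk m1 = blk m2"
  shows "t_fun x m1 / sqrt (real m1) * (t_fun x m2 / sqrt (real m2)) \<le> 4 * Fp x (m1, m2)"
proof -
  define M where "M = real (max m1 m2)"
  define \<mu> where "\<mu> = real (min m1 m2)"
  have prod: "real m1 * real m2 = M * \<mu>" unfolding M_def \<mu>_def by (simp add: max_def min_def)
  have M1: "M \<ge> 1" unfolding M_def using m by simp
  have "real (max m1 m2) \<le> real (2 * min m1 m2)" by (simp only: of_nat_le_iff) (rule blk_max[OF m])
  hence hm: "\<mu> \<ge> M / 2" unfolding M_def \<mu>_def by simp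
  have "M * \<mu> \<ge> M * (M / 2)" using hm M1 by (intro mult_left_mono) auto
  moreover have "M * \<mu> \<ge> 0" unfolding M_def \<mu>_def by simp
  ultimately have pm: "real m1 * real m2 \<ge> (M / 2) ^ 2" using prod by (simp add: power2_eq_square)
  have "sqrt (real m1) * sqrt (real m2) = sqrt (real m1 * real m2)" by (simp add: real_sqrt_mult)
  also have "\<dots> \<ge> sqrt ((M/2)^2)" using pm by (intro real_sqrt_le_mono)
  finally have sq: "sqrt (real m1) * sqrt (real m2) \<ge> M / 2" using M1 by simp
  have "1 / (sqrt (real m1) * sqrt (real m2)) \<le> 1 / (M / 2)"
    using sq M1 by (intro divide_left_mono) auto
  also have "\<dots> = 2 / M" by simp
  also have "\<dots> \<le> 4 * (M * \<mu>) / M ^ 3"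
  proof -
    have "4 * (M * \<mu>) / M ^ 3 = 4 * \<mu> / M ^ 2" using M1 by (simp add: power2_eq_square power3_eq_cube)
    also have "\<dots> \<ge> 4 * (M/2) / M ^ 2" using hm M1 by (intro divide_right_mono) auto
    also have "4 * (M/2) / M ^ 2 = 2 / M" using M1 by (simp add: power2_eq_square)
    finally show ?thesis .
  qed
  finally have key: "1 / (sqrt (real m1) * sqrt (real m2)) \<le> 4 * (real m1 * real m2) / M ^ 3"
    using prod by simp
  have t0: "0 \<le> t_fun x m1 * t_fun x m2" using t_fun_nonneg[OF l] by simp
  have "t_fun x m1 / sqrt (real m1) * (t_fun x m2 / sqrt (real m2)) =
        (t_fun x m1 * t_fun x m2) * (1 / (sqrt (real m1) * sqrt (real m2)))" by simp
  also have "\<dots> \<le> (t_fun x m1 * t_fun x m2) * (4 * (real m1 * real m2) / M ^ 3)"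
    using key t0 by (intro mult_left_mono) auto
  also have "\<dots> = 4 * Fp x (m1, m2)" unfolding Fp_def M_def by simp
  finally show ?thesis .
qed

lemma blocks:
  assumes l: "0 \<le> lam x" and z: "z \<ge> 2"
  shows "(\<Sum>m\<in>Iz z. t_fun x m / sqrt (real m)) ^ 2 \<le> 8 * ln z / ln 2 * sum (Fp x) (Iz z \<times> Iz z)"
proof -
  define a where "a = (\<lambda>m. t_fun x m / sqrt (real m))"
  define K where "K = blk ` Iz z"
  define B where "B = (\<lambda>k. {m \<in> Iz z. blk m = k})"
  define A where "A = (\<lambda>k. sum a (B k))"
  have F0: "0 \<le> Fp x q" for q by (rule Fp_nonneg[OF l])
  have finK: "finite K" unfolding K_def by simp
  have S: "(\<Sum>m\<in>Iz z. a m) = (\<Sum>k\<in>K. A k)"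
    unfolding K_def A_def B_def by (rule sum.image_gen) simp
  have Ak: "A k ^ 2 \<le> (\<Sum>m1\<in>B k. \<Sum>m2\<in>Iz z. 4 * Fp x (m1, m2))" if "k \<in> K" for k
  proof -
    have "A k ^ 2 = (\<Sum>m1\<in>B k. \<Sum>m2\<in>B k. a m1 * a m2)"
      unfolding A_def power2_eq_square by (rule sum_product)
    also have "\<dots> \<le> (\<Sum>m1\<in>B k. \<Sum>m2\<in>B k. 4 * Fp x (m1, m2))"
    proof (intro sum_mono)
      fix m1 m2 assume "m1 \<in> B k" "m2 \<in> B k"
      hence "m1 \<ge> 1" "m2 \<ge> 1" "blk m1 = blk m2" unfolding B_def Iz_def by auto
      thus "a m1 * a m2 \<le> 4 * Fp x (m1, m2)" unfolding a_def by (rule pair_bound[OF l])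
    qed
    also have "\<dots> \<le> (\<Sum>m1\<in>B k. \<Sum>m2\<in>Iz z. 4 * Fp x (m1, m2))"
      by (intro sum_mono sum_mono2) (auto simp: B_def F0)
    finally show ?thesis .
  qed
  have "(\<Sum>k\<in>K. A k ^ 2) \<le> (\<Sum>k\<in>K. \<Sum>m1\<in>B k. \<Sum>m2\<in>Iz z. 4 * Fp x (m1, m2))"
    by (intro sum_mono Ak)
  also have "\<dots> = (\<Sum>m1\<in>Iz z. \<Sum>m2\<in>Iz z. 4 * Fp x (m1, m2))"
    unfolding K_def B_def by (rule sum.image_gen[symmetric]) simp
  also have "\<dots> = 4 * sum (Fp x) (Iz z \<times> Iz z)"
    by (simp add: sum.cartesian_product sum_distrib_left)
  finally have SA: "(\<Sum>k\<in>K. A k ^ 2) \<le> 4 * sum (Fp x) (Iz z \<times> Iz z)" .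
  have lz: "log 2 z \<ge> 1" using z by simp
  have cardK: "real (card K) \<le> 2 * ln z / ln 2"
  proof -
    have "K \<subseteq> {0..nat \<lfloor>log 2 z\<rfloor>}"
    proof
      fix k assume "k \<in> K"
      then obtain m where m: "m \<in> Iz z" "k = blk m" unfolding K_def by auto
      have "log 2 (real m) \<le> log 2 z" using m unfolding Iz_def by auto
      hence "\<lfloor>log 2 (real m)\<rfloor> \<le> \<lfloor>log 2 z\<rfloor>" by (rule floor_mono)
      thus "k \<in> {0..nat \<lfloor>log 2 z\<rfloor>}" using m unfolding blk_def by auto
    qed
    hence "card K \<le> card {0..nat \<lfloor>log 2 z\<rfloor>}" by (intro card_mono) auto
    hence "real (card K) \<le> real (nat \<lfloor>log 2 z\<rfloor>) + 1" by simp
    also have "real (nat \<lfloor>log 2 z\<rfloor>) \<le> log 2 z" using lz by (intro of_nat_floor) simp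
    hence "real (nat \<lfloor>log 2 z\<rfloor>) + 1 \<le> 2 * log 2 z" using lz by linarith
    also have "2 * log 2 z = 2 * ln z / ln 2" by (simp add: log_def)
    finally show ?thesis by simp
  qed
  have "(\<Sum>m\<in>Iz z. a m) ^ 2 \<le> (\<Sum>k\<in>K. A k ^ 2) * real (card K)"
    unfolding S by (rule sum_squared_le_sum_of_squares)
  also have "\<dots> \<le> (4 * sum (Fp x) (Iz z \<times> Iz z)) * (2 * ln z / ln 2)"
    using SA cardK by (intro mult_mono) (auto intro: sum_nonneg F0)
  also have "\<dots> = 8 * ln z / ln 2 * sum (Fp x) (Iz z \<times> Iz z)" by simp
  finally show ?thesis unfolding a_def .
qed

lemma part1_main:
  assumes l: "0 \<le> lam x" and l3: "lam x ^ 2 \<ge> 3" and z: "z \<ge> 2"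
  shows "ln 2 / (8 * exp 2) / ln z * (\<Sum>m\<in>Iz z. t_fun x m / sqrt (real m)) ^ 2 \<le> sum (Fp x) (Cop z)"
proof -
  define S where "S = (\<Sum>m\<in>Iz z. t_fun x m / sqrt (real m))"
  define L where "L = sum (Fp x) (Cop z)"
  define B where "B = (\<Sum>d\<in>Iz z. t_fun x d ^ 2 / real d)"
  have L0: "L \<ge> 0" unfolding L_def by (intro sum_nonneg Fp_nonneg l)
  have lnz: "ln z > 0" using z by simp
  have "S ^ 2 \<le> 8 * ln z / ln 2 * sum (Fp x) (Iz z \<times> Iz z)" unfolding S_def by (rule blocks[OF l z])
  also have "\<dots> \<le> 8 * ln z / ln 2 * (B * L)"
    unfolding B_def L_def using lnz by (intro mult_left_mono gcd_decomp l) auto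
  also have "\<dots> \<le> 8 * ln z / ln 2 * (exp 2 * L)"
    unfolding B_def using lnz L0 B_bound[OF l l3] by (intro mult_left_mono mult_right_mono) auto
  finally have h: "S ^ 2 \<le> (8 * exp 2 * ln z / ln 2) * L" by (simp add: algebra_simps)
  define c where "c = 8 * exp 2 * ln z / ln 2"
  have c0: "c > 0" unfolding c_def using lnz by simp
  have "S ^ 2 / c \<le> L" using h c0 unfolding c_def[symmetric] by (simp add: pos_divide_le_eq mult.commute)
  moreover have "S ^ 2 / c = ln 2 / (8 * exp 2) / ln z * S ^ 2" unfolding c_def using lnz by (simp add: field_simps)
  ultimately show ?thesis unfolding S_def L_def by simp
qed


definition PS :: "real \<Rightarrow> real \<Rightarrow> nat set" where "PS u v = {p. prime p \<and> u < real p \<and> real p \<le> v}"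
definition Rs :: "real \<Rightarrow> real \<Rightarrow> real" where "Rs u v = (\<Sum>p\<in>PS u v. 1 / (real p * ln (real p)))"

lemma finite_PS [simp]: "finite (PS u v)"
  unfolding PS_def by (rule finite_subset[of _ "{..nat \<lfloor>v\<rfloor>}"]) (auto simp: le_nat_floor)

lemma TP_PS: "TP u v = (\<Sum>p\<in>PS u v. ln (real p) / real p)" unfolding TP_def PS_def ..

lemma PS_ge2: "p \<in> PS u v \<Longrightarrow> real p \<ge> 2" unfolding PS_def using prime_ge_2_nat by force

lemma Rs_nonneg: "0 \<le> Rs u v"
  unfolding Rs_def
proof (intro sum_nonneg)
  fix p assume "p \<in> PS u v"
  hence "real p \<ge> 2" by (rule PS_ge2)
  thus "0 \<le> 1 / (real p * ln (real p))" by simp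
qed

lemma Rs_lower:
  assumes "1 \<le> u" "u \<le> v"
  shows "(ln v - ln u - 8) / (ln v) ^ 2 \<le> Rs u v"
proof (cases "v \<le> 1")
  case True
  hence "v = 1" using assms by simp
  thus ?thesis using Rs_nonneg[of u v] by simp
next
  case False
  hence lv: "ln v > 0" by simp
  have "(ln v - ln u - 8) / (ln v) ^ 2 \<le> TP u v / (ln v) ^ 2"
    using TP_lower[OF assms] lv by (intro divide_right_mono) auto
  also have "\<dots> = (\<Sum>p\<in>PS u v. ln (real p) / real p / (ln v) ^ 2)"
    unfolding TP_PS by (simp add: sum_divide_distrib)
  also have "\<dots> \<le> Rs u v" unfolding Rs_def
  proof (intro sum_mono)
    fix p assume p: "p \<in> PS u v"
    have p2: "real p \<ge> 2" by (rule PS_ge2[OF p])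
    have lp: "ln (real p) > 0" using p2 by simp
    have "ln (real p) \<le> ln v" using p p2 unfolding PS_def by (subst ln_le_cancel_iff) auto
    hence "(ln (real p))^2 \<le> (ln v)^2" using lp by (intro power_mono) auto
    hence "ln (real p) / real p / (ln v)^2 \<le> ln (real p) / real p / (ln (real p))^2"
      using lp p2 lv by (intro divide_left_mono) auto
    also have "\<dots> = 1 / (real p * ln (real p))" using lp p2 by (simp add: power2_eq_square field_simps)
    finally show "ln (real p) / real p / (ln v)^2 \<le> 1 / (real p * ln (real p))" .
  qed
  finally show ?thesis .
qed

lemma Rs_upper:
  assumes "1 < u" "u \<le> v"
  shows "Rs u v \<le> (ln v - ln u + 8) / (ln u) ^ 2"
proof -
  have lu: "ln u > 0" using assms by simp
  have "Rs u v \<le> (\<Sum>p\<in>PS u v. ln (real p) / real p / (ln u) ^ 2)" unfolding Rs_def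
  proof (intro sum_mono)
    fix p assume p: "p \<in> PS u v"
    have p2: "real p \<ge> 2" by (rule PS_ge2[OF p])
    have lp: "ln (real p) > 0" using p2 by simp
    have "ln u \<le> ln (real p)" using p assms unfolding PS_def by (subst ln_le_cancel_iff) auto
    hence "(ln u)^2 \<le> (ln (real p))^2" using lu by (intro power_mono) auto
    have "1 / (real p * ln (real p)) = ln (real p) / real p / (ln (real p))^2"
      using lp p2 by (simp add: power2_eq_square field_simps)
    also have "\<dots> \<le> ln (real p) / real p / (ln u)^2"
      using lp p2 lu \<open>(ln u)^2 \<le> (ln (real p))^2\<close> by (intro divide_left_mono) auto
    finally show "1 / (real p * ln (real p)) \<le> ln (real p) / real p / (ln u)^2" .
  qed
  also have "\<dots> = TP u v / (ln u) ^ 2" unfolding TP_PS by (simp add: sum_divide_distrib)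
  also have "\<dots> \<le> (ln v - ln u + 8) / (ln u) ^ 2"
    using TP_upper[of u v] assms lu by (intro divide_right_mono) auto
  finally show ?thesis .
qed

lemma Rs_split:
  assumes "u \<le> v" "v \<le> w"
  shows "Rs u w = Rs u v + Rs v w"
proof -
  have "PS u w = PS u v \<union> PS v w" "PS u v \<inter> PS v w = {}" using assms unfolding PS_def by auto
  thus ?thesis unfolding Rs_def by (simp add: sum.union_disjoint)
qed

lemma chop:
  assumes L: "L > 0" and c: "c > 1"
  shows "(\<Sum>j<J. (c - 1) / (L * c ^ (j + 2)) - 8 / L ^ 2) \<le> Rs (exp L) (exp (L * c ^ J))"
proof (induction J)
  case 0 thus ?case using Rs_nonneg by simp
next
  case (Suc J)
  have cJ: "c ^ J \<ge> 1" using c by (simp add: one_le_power)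
  have m1: "exp L \<le> exp (L * c ^ J)" using L cJ by simp
  have m2: "exp (L * c ^ J) \<le> exp (L * c ^ Suc J)" using L cJ c by (simp add: mult_le_cancel_left)
  have e1: "1 \<le> exp (L * c ^ J)" using L cJ by simp
  have "Rs (exp (L * c ^ J)) (exp (L * c ^ Suc J)) \<ge>
        (L * c ^ Suc J - L * c ^ J - 8) / (L * c ^ Suc J) ^ 2"
    using Rs_lower[OF e1 m2] by simp
  moreover have "(L * c ^ Suc J - L * c ^ J - 8) / (L * c ^ Suc J) ^ 2 \<ge> (c - 1) / (L * c ^ (J + 2)) - 8 / L ^ 2"
  proof -
    have cp: "c ^ Suc J > 0" using c by simp
    have "(L * c ^ Suc J - L * c ^ J - 8) / (L * c ^ Suc J) ^ 2 =
          (c - 1) / (L * c ^ (J + 2)) - 8 / (L * c ^ Suc J) ^ 2"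
      using L cp c by (simp add: field_simps power2_eq_square)
    moreover have "8 / (L * c ^ Suc J) ^ 2 \<le> 8 / L ^ 2"
    proof -
      have cS: "c ^ Suc J \<ge> 1" by (rule one_le_power) (use c in simp)
      have "L \<le> L * c ^ Suc J" using L cS by simp
      hence A: "L ^ 2 \<le> (L * c ^ Suc J) ^ 2" using L by (intro power_mono) auto
      have B: "0 < (L * c ^ Suc J) ^ 2 * L ^ 2" using L c by simp
      show ?thesis by (rule divide_left_mono[OF A _ B]) simp
    qed
    ultimately show ?thesis by linarith
  qed
  ultimately show ?case using Suc Rs_split[OF m1 m2] by simp
qed

lemma chop_closed:
  assumes L: "L > 0" and c: "c > 1"
  shows "(1 - (1/c) ^ J) / (c * L) - 8 * real J / L ^ 2 \<le> Rs (exp L) (exp (L * c ^ J))"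
proof -
  have t: "(c-1)/(L*c^(j+2)) = (c-1)/(L*c^2) * (1/c)^j" for j
    by (simp add: power_add power_one_over mult_ac power2_eq_square)
  have "(\<Sum>j<J. (c - 1) / (L * c ^ (j + 2)) - 8 / L ^ 2) = (\<Sum>j<J. (c - 1) / (L * c ^ (j + 2))) - 8 * real J / L ^ 2"
    by (simp add: sum_subtractf)
  also have "(\<Sum>j<J. (c - 1) / (L * c ^ (j + 2))) = (c-1)/(L*c^2) * (\<Sum>j<J. (1/c)^j)"
    unfolding t by (simp add: sum_distrib_left)
  also have "(\<Sum>j<J. (1/c) ^ j) = (1 - (1/c) ^ J) / (1 - 1/c)"
    using c by (subst sum_gp_strict) auto
  also have "(c - 1) / (L * c ^ 2) * ((1 - (1/c) ^ J) / (1 - 1/c)) = (1 - (1/c) ^ J) / (c * L)"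
    using L c by (simp add: field_simps power2_eq_square)
  finally show ?thesis using chop[OF L c, of J] by simp
qed


lemma sqrt_prod: "finite A \<Longrightarrow> sqrt (\<Prod>p\<in>A. f p) = (\<Prod>p\<in>A. sqrt (f p))"
  by (induction A rule: finite_induct) (auto simp: real_sqrt_mult)

lemma subset_sum_lower:
  fixes y :: "nat \<Rightarrow> real"
  assumes P: "finite P" and y: "\<And>p. p \<in> P \<Longrightarrow> 0 \<le> y p"
  shows "(\<Prod>p\<in>P. 1 + y p) - exp (- real k) * (\<Prod>p\<in>P. 1 + exp 1 * y p)
         \<le> (\<Sum>A\<in>{A\<in>Pow P. card A \<le> k}. \<Prod>p\<in>A. y p)"
proof -
  define Lo where "Lo = {A\<in>Pow P. card A \<le> k}"
  define Hi where "Hi = {A\<in>Pow P. \<not> card A \<le> k}"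
  have tot: "(\<Prod>p\<in>P. 1 + g p) = (\<Sum>A\<in>Pow P. \<Prod>p\<in>A. g p)" for g :: "nat \<Rightarrow> real"
    using prod_add[OF P, of g "\<lambda>_. 1"] by (simp add: add_ac)
  have PL: "Pow P = Lo \<union> Hi" "Lo \<inter> Hi = {}" unfolding Lo_def Hi_def by auto
  have fin: "finite Lo" "finite Hi" using P unfolding Lo_def Hi_def by auto
  have split: "(\<Sum>A\<in>Pow P. \<Prod>p\<in>A. y p) = (\<Sum>A\<in>Lo. \<Prod>p\<in>A. y p) + (\<Sum>A\<in>Hi. \<Prod>p\<in>A. y p)"
    unfolding PL(1) using fin PL(2) by (rule sum.union_disjoint)
  have py: "0 \<le> (\<Prod>p\<in>A. y p)" if "A \<in> Pow P" for A using y that by (auto intro: prod_nonneg)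
  have pey: "(\<Prod>p\<in>A. exp 1 * y p) = exp (real (card A)) * (\<Prod>p\<in>A. y p)" for A
    by (simp add: prod.distrib exp_of_nat_mult[symmetric])
  have "(\<Sum>A\<in>Hi. \<Prod>p\<in>A. y p) \<le> (\<Sum>A\<in>Hi. exp (- real k) * (\<Prod>p\<in>A. exp 1 * y p))"
  proof (intro sum_mono)
    fix A assume A: "A \<in> Hi"
    hence "real (card A) - real k \<ge> 0" unfolding Hi_def by auto
    hence e: "1 \<le> exp (real (card A) - real k)" by simp
    have "(\<Prod>p\<in>A. y p) \<le> exp (real (card A) - real k) * (\<Prod>p\<in>A. y p)"
      using e py[of A] A unfolding Hi_def by (simp add: mult_le_cancel_right1)
    also have "\<dots> = exp (- real k) * (\<Prod>p\<in>A. exp 1 * y p)"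
      unfolding pey by (simp add: exp_diff exp_minus field_simps)
    finally show "(\<Prod>p\<in>A. y p) \<le> exp (- real k) * (\<Prod>p\<in>A. exp 1 * y p)" .
  qed
  also have "\<dots> \<le> (\<Sum>A\<in>Pow P. exp (- real k) * (\<Prod>p\<in>A. exp 1 * y p))"
  proof (rule sum_mono2)
    show "finite (Pow P)" using P by simp
    show "Hi \<subseteq> Pow P" unfolding Hi_def by auto
    fix A assume "A \<in> Pow P - Hi"
    hence "A \<subseteq> P" by auto
    thus "0 \<le> exp (- real k) * (\<Prod>p\<in>A. exp 1 * y p)" using y
      by (intro mult_nonneg_nonneg prod_nonneg) auto
  qed
  also have "\<dots> = exp (- real k) * (\<Prod>p\<in>P. 1 + exp 1 * y p)"
    by (simp add: tot sum_distrib_left)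
  finally have "(\<Sum>A\<in>Hi. \<Prod>p\<in>A. y p) \<le> exp (- real k) * (\<Prod>p\<in>P. 1 + exp 1 * y p)" .
  moreover have "(\<Prod>p\<in>P. 1 + y p) = (\<Sum>A\<in>Lo. \<Prod>p\<in>A. y p) + (\<Sum>A\<in>Hi. \<Prod>p\<in>A. y p)"
    by (simp add: tot split)
  ultimately show ?thesis unfolding Lo_def by linarith
qed

lemma S_ge_family:
  assumes l: "0 \<le> lam x" and fA: "finite \<A>"
    and A: "\<And>A. A \<in> \<A> \<Longrightarrow> finite A \<and> (\<forall>p\<in>A. prime p) \<and> real (\<Prod>A) \<le> z"
  shows "(\<Sum>A\<in>\<A>. \<Prod>p\<in>A. t_pp x p 1 / sqrt (real p)) \<le> (\<Sum>m\<in>Iz z. t_fun x m / sqrt (real m))"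
proof -
  define g where "g = (\<lambda>m. t_fun x m / sqrt (real m))"
  have eq: "(\<Prod>p\<in>A. t_pp x p 1 / sqrt (real p)) = g (\<Prod>A)" if "A \<in> \<A>" for A
  proof -
    have fa: "finite A" "\<And>p. p \<in> A \<Longrightarrow> prime p" using A[OF that] by auto
    have "g (\<Prod>A) = (\<Prod>p\<in>A. t_pp x p 1) / sqrt (\<Prod>p\<in>A. real p)"
      unfolding g_def using t_fun_prod_primes[OF fa] by (simp add: of_nat_prod)
    also have "\<dots> = (\<Prod>p\<in>A. t_pp x p 1 / sqrt (real p))"
      using fa by (simp add: sqrt_prod prod_dividef)
    finally show ?thesis by simp
  qed
  have inj: "inj_on Prod \<A>"
  proof (rule inj_onI)
    fix A B assume "A \<in> \<A>" "B \<in> \<A>" "\<Prod>A = \<Prod>B"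
    thus "A = B" using prime_factors_prod_primes A by metis
  qed
  have "(\<Sum>A\<in>\<A>. \<Prod>p\<in>A. t_pp x p 1 / sqrt (real p)) = (\<Sum>A\<in>\<A>. g (\<Prod>A))"
    by (intro sum.cong refl eq)
  also have "\<dots> = sum g (Prod ` \<A>)" using inj by (simp add: sum.reindex)
  also have "\<dots> \<le> sum g (Iz z)"
  proof (rule sum_mono2)
    show "Prod ` \<A> \<subseteq> Iz z"
    proof
      fix m assume "m \<in> Prod ` \<A>"
      then obtain A where A': "A \<in> \<A>" "m = \<Prod>A" by auto
      have "0 < \<Prod>A" by (rule prod_pos) (use A[OF A'(1)] in \<open>auto intro: prime_gt_0_nat\<close>)
      hence "1 \<le> m" using A' by simp
      thus "m \<in> Iz z" using A[OF A'(1)] A' unfolding Iz_def by auto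
    qed
    show "\<And>b. b \<in> Iz z - Prod ` \<A> \<Longrightarrow> 0 \<le> g b" unfolding g_def using t_fun_nonneg[OF l] by simp
  qed simp
  finally show ?thesis unfolding g_def .
qed

lemma Cop_mono: "0 \<le> lam x \<Longrightarrow> z1 \<le> z \<Longrightarrow> sum (Fp x) (Cop z1) \<le> sum (Fp x) (Cop z)"
  by (rule sum_mono2[OF finite_Cop]) (auto simp: Cop_def Fp_nonneg)

lemma y_bounds:
  assumes l1: "lam x \<ge> 1" and L1: "ln (lam x ^ 2) \<ge> 1" and p: "prime p" "lam x ^ 2 < real p"
    "real p \<le> exp ((ln (lam x))^2)"
  shows "(1 - 1 / (ln (lam x ^ 2))^2) * (lam x / (real p * ln (real p))) \<le> t_pp x p 1 / sqrt (real p)"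
    "t_pp x p 1 / sqrt (real p) \<le> lam x / (real p * ln (real p))"
    "lam x / (real p * ln (real p)) \<le> 1 / lam x"
proof -
  define l where "l = lam x"
  define L where "L = ln (l ^ 2)"
  define r where "r = l / (sqrt (real p) * ln (real p))"
  have lpos: "l > 0" using l1 unfolding l_def by simp
  have p1: "real p > 1" using prime_gt_1_nat[OF p(1)] by simp
  have lnp: "ln (real p) \<ge> L" unfolding L_def using p(2) lpos l_def p1 by (subst ln_le_cancel_iff) auto
  have Lp: "L \<ge> 1" using L1 unfolding L_def l_def .
  have sp: "sqrt (real p) \<ge> l" using p(2) lpos unfolding l_def
    by (metis less_eq_real_def real_sqrt_abs real_sqrt_le_mono abs_of_pos)
  have rr: "r_pp x p 1 = r" unfolding r_pp_def r_def l_def using p by auto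
  have lnp0: "ln (real p) > 0" using p1 by simp
  have r0: "r \<ge> 0" unfolding r_def using lpos lnp0 by simp
  have "r \<le> l / (l * L)" unfolding r_def
  proof (rule divide_left_mono)
    show "l * L \<le> sqrt (real p) * ln (real p)" using lpos Lp lnp sp by (intro mult_mono) auto
    have "0 < sqrt (real p) * ln (real p)" using p1 by simp
    moreover have "0 < l * L" using lpos Lp by simp
    ultimately show "0 < sqrt (real p) * ln (real p) * (l * L)" by simp
  qed (use lpos in simp)
  hence rL: "r \<le> 1 / L" using lpos by simp
  hence r2: "r ^ 2 \<le> 1 / L ^ 2" using r0 by (metis power_mono power_one_over)
  have tp: "t_pp x p 1 = r / (1 + r^2)" unfolding t_pp_def rr ..
  have "r * (1 - r^2) \<le> r / (1 + r^2)"
  proof -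
    have "r * (1 - r^2) * (1 + r^2) = r * (1 - r^4)" by (simp add: algebra_simps power2_eq_square power4_eq_xxxx)
    also have "\<dots> \<le> r" using r0 by (simp add: mult_left_le)
    finally show ?thesis by (simp add: pos_le_divide_eq add_pos_nonneg)
  qed
  moreover have "r * (1 - 1 / L^2) \<le> r * (1 - r^2)" using r2 r0 by (intro mult_left_mono) auto
  ultimately have tlow: "r * (1 - 1 / L^2) \<le> t_pp x p 1" unfolding tp by linarith
  have tup: "t_pp x p 1 \<le> r" unfolding tp using r0 by (simp add: divide_le_eq add_pos_nonneg mult_le_cancel_left1)
  have sp0: "sqrt (real p) > 0" using p1 by simp
  have rs: "r / sqrt (real p) = l / (real p * ln (real p))"
    unfolding r_def using sp0 p1 by (simp add: field_simps)
  have "(1 - 1 / L^2) * (l / (real p * ln (real p))) = (1 - 1 / L^2) * (r / sqrt (real p))"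
    using rs by simp
  also have "\<dots> = r * (1 - 1/L^2) / sqrt (real p)" by (simp add: mult.commute)
  also have "\<dots> \<le> t_pp x p 1 / sqrt (real p)" using tlow sp0 by (intro divide_right_mono) auto
  finally show "(1 - 1 / (ln (lam x ^ 2))^2) * (lam x / (real p * ln (real p))) \<le> t_pp x p 1 / sqrt (real p)"
    unfolding L_def l_def .
  have "t_pp x p 1 / sqrt (real p) \<le> r / sqrt (real p)" using tup sp0 by (intro divide_right_mono) auto
  thus "t_pp x p 1 / sqrt (real p) \<le> lam x / (real p * ln (real p))" using rs unfolding l_def by simp
  have "l / (real p * ln (real p)) \<le> l / (l^2 * 1)"
  proof (rule divide_left_mono)
    show "l^2 * 1 \<le> real p * ln (real p)" using lpos p(2) lnp Lp l_def by (intro mult_mono) auto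
    show "0 < real p * ln (real p) * (l^2 * 1)" using lpos p1 by simp
  qed (use lpos in simp)
  also have "\<dots> = 1 / l" using lpos by (simp add: power2_eq_square)
  finally show "lam x / (real p * ln (real p)) \<le> 1 / lam x" unfolding l_def .
qed


lemma part2_core:
  fixes x z c :: real and J :: nat
  assumes l3: "lam x \<ge> 3"
    and c: "c > 1"
    and L8: "ln (lam x ^ 2) \<ge> 8"
    and hW: "ln (lam x ^ 2) * c ^ J \<le> (ln (lam x))^2"
    and hk: "4 * lam x * c ^ J / ln (lam x ^ 2) + 2 \<le> 3 * lam x * ln (ln (lam x)) / (ln (lam x ^ 2) * c ^ J)"
    and hll: "ln (ln (lam x)) \<ge> 1"
    and z: "z \<ge> 1" "ln z > 3 * lam x * ln (ln (lam x))"
  shows "ln 2 / (8 * exp 2) / (4 * lam x * ln (ln (lam x))) * (1/4) *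
           exp (2 * (1 - 1 / lam x) * ((1 - 1 / (ln (lam x ^ 2))^2) * lam x *
              ((1 - (1/c) ^ J) / (c * ln (lam x ^ 2)) - 8 * real J / (ln (lam x ^ 2))^2)))
         \<le> sum (Fp x) (Cop z)"
proof -
  define l where "l = lam x"
  define L where "L = ln (l ^ 2)"
  define K1 where "K1 = c ^ J"
  define W where "W = exp (L * K1)"
  define P where "P = PS (l ^ 2) W"
  define y where "y = (\<lambda>p. t_pp x p 1 / sqrt (real p))"
  define Y where "Y = sum y P"
  define LL where "LL = ln (ln l)"
  have l0: "l > 0" "l \<ge> 3" using l3 unfolding l_def by auto
  have L0: "L \<ge> 8" using L8 unfolding L_def l_def .
  have K1: "K1 \<ge> 1" unfolding K1_def using c by (simp add: one_le_power)
  have LL1: "LL \<ge> 1" using hll unfolding LL_def l_def .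
  have lam0: "0 \<le> lam x" using l0 unfolding l_def by simp
  have expL: "exp L = l ^ 2" unfolding L_def using l0 by simp
  have finP: "finite P" unfolding P_def by simp
  have Pp: "prime p" "l ^ 2 < real p" "real p \<le> exp ((ln l)^2)" if "p \<in> P" for p
  proof -
    show "prime p" "l ^ 2 < real p" using that unfolding P_def PS_def by auto
    have "real p \<le> W" using that unfolding P_def PS_def by auto
    also have "W \<le> exp ((ln l)^2)" unfolding W_def using hW unfolding L_def K1_def l_def by simp
    finally show "real p \<le> exp ((ln l)^2)" .
  qed
  have yb: "(1 - 1 / L^2) * (l / (real p * ln (real p))) \<le> y p"
          "y p \<le> l / (real p * ln (real p))" "l / (real p * ln (real p)) \<le> 1 / l" if "p \<in> P" for p
    using y_bounds[of x p] Pp[OF that] l0 L0 unfolding y_def L_def l_def by auto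
  have y0: "0 \<le> y p" for p unfolding y_def using t_pp_nonneg[OF lam0] by simp
  have lRs: "l * Rs (l ^ 2) W = (\<Sum>p\<in>P. l / (real p * ln (real p)))"
    unfolding Rs_def P_def by (simp add: sum_distrib_left)
  have l2: "l ^ 2 > 1" using l0 by (simp add: power2_eq_square) (smt (verit) mult_less_cancel_left1)
  have Wge: "l ^ 2 \<le> W" unfolding W_def using expL L0 K1
    by (metis exp_le_cancel_iff mult_le_cancel_left1 less_le_trans zero_less_numeral order_less_le_trans linorder_not_le less_le)
  have "Y \<le> l * Rs (l ^ 2) W" unfolding lRs Y_def by (intro sum_mono yb)
  also have "\<dots> \<le> l * ((ln W - ln (l^2) + 8) / (ln (l^2))^2)"
    using Rs_upper[OF l2 Wge] l0 by (intro mult_left_mono) auto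
  also have "\<dots> = l * ((L * K1 - L + 8) / L^2)" unfolding W_def L_def by simp
  also have "\<dots> \<le> l * (K1 / L)"
  proof -
    have "(L * K1 - L + 8) / L^2 \<le> (L * K1) / L^2" using L0 by (intro divide_right_mono) auto
    also have "\<dots> = K1 / L" using L0 by (simp add: power2_eq_square)
    finally show ?thesis using l0 by (intro mult_left_mono) auto
  qed
  finally have Yup: "Y \<le> l * K1 / L" by simp
  define Ylow where "Ylow = (1 - 1 / L^2) * l * ((1 - (1/c) ^ J) / (c * L) - 8 * real J / L^2)"
  have "1 * 1 \<le> L * L" using L0 by (intro mult_mono) auto
  hence L1: "1 - 1 / L^2 \<ge> 0" by (simp add: power2_eq_square)
  have "Ylow \<le> (1 - 1 / L^2) * l * Rs (l^2) W"
    unfolding Ylow_def using chop_closed[of L c J] L0 c expL l0 L1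
    unfolding W_def K1_def by (intro mult_left_mono) auto
  also have "\<dots> = (\<Sum>p\<in>P. (1 - 1 / L^2) * (l / (real p * ln (real p))))"
    using lRs by (simp add: sum_distrib_left mult.assoc)
  also have "\<dots> \<le> Y" unfolding Y_def by (intro sum_mono yb)
  finally have Ylo: "Ylow \<le> Y" .
  have prod_lo: "exp ((1 - 1/l) * Y) \<le> (\<Prod>p\<in>P. 1 + y p)"
  proof -
    have "exp ((1 - 1/l) * Y) = (\<Prod>p\<in>P. exp ((1 - 1/l) * y p))"
      unfolding Y_def by (simp add: sum_distrib_left exp_sum finP)
    also have "\<dots> \<le> (\<Prod>p\<in>P. 1 + y p)"
    proof (intro prod_mono conjI)
      fix p assume p: "p \<in> P"
      have yp: "y p \<le> 1 / l" using yb(2)[OF p] yb(3)[OF p] by linarith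
      have y1: "y p \<le> 1" using yp l0 by (smt (verit) divide_le_eq_1_pos)
      have "(1 - 1/l) * y p \<le> y p - (y p)^2"
      proof -
        have "(y p)^2 \<le> y p * (1/l)" using mult_left_mono[OF yp y0[of p]] by (simp add: power2_eq_square)
        thus ?thesis by (simp add: algebra_simps)
      qed
      also have "\<dots> \<le> ln (1 + y p)" using ln_one_plus_pos_lower_bound[OF y0 y1] .
      finally have "exp ((1 - 1/l) * y p) \<le> exp (ln (1 + y p))" by simp
      thus "exp ((1 - 1/l) * y p) \<le> 1 + y p" using y0[of p] by (simp add: add_pos_nonneg)
    qed simp
    finally show ?thesis .
  qed
  have prod_up: "(\<Prod>p\<in>P. 1 + exp 1 * y p) \<le> exp (exp 1 * Y)"
    using prod_le_exp_sum[of P "\<lambda>p. exp 1 * y p"] y0 unfolding Y_def by (simp add: sum_distrib_left)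
  define k where "k = nat \<lfloor>3 * l * LL / (L * K1)\<rfloor>"
  have kge: "real k \<ge> 4 * Y + 1"
  proof -
    have "real k \<ge> 3 * l * LL / (L * K1) - 1"
    proof -
      have "3 * l * LL / (L * K1) \<ge> 0" using l0 LL1 L0 K1 by simp
      thus ?thesis unfolding k_def using real_of_int_floor_gt_diff_one[of "3 * l * LL / (L * K1)"]
        by (simp add: of_nat_int_floor)
    qed
    moreover have "4 * (l * K1 / L) + 2 \<le> 3 * l * LL / (L * K1)"
      using hk unfolding l_def L_def K1_def LL_def by simp
    ultimately show ?thesis using Yup by linarith
  qed
  have kle: "real k * (L * K1) \<le> 3 * l * LL"
  proof -
    have "real k \<le> 3 * l * LL / (L * K1)" unfolding k_def
      using l0 LL1 L0 K1 by (simp add: of_nat_int_floor)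
    thus ?thesis using L0 K1 by (simp add: pos_le_divide_eq)
  qed
  define z1 where "z1 = min z (exp (4 * l * LL))"
  have lnz1: "ln z1 > 3 * l * LL" "ln z1 \<le> 4 * l * LL"
  proof -
    have "ln (exp (4 * l * LL)) > 3 * l * LL" using l0 LL1 by simp
    moreover have "ln z > 3 * l * LL" using z unfolding l_def LL_def by simp
    ultimately show "ln z1 > 3 * l * LL" unfolding z1_def using z by (simp add: min_def)
    have a: "z1 \<le> exp (4 * l * LL)" unfolding z1_def by simp
    have b: "z1 > 0" unfolding z1_def using z by simp
    have "ln z1 \<le> ln (exp (4 * l * LL))" using a b by (subst ln_le_cancel_iff) auto
    thus "ln z1 \<le> 4 * l * LL" by simp
  qed
  have z1_2: "z1 \<ge> 2"
  proof -
    have "3 * 1 \<le> l * LL" using l0 LL1 by (intro mult_mono) auto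
    hence "ln z1 > 1" using lnz1 by simp
    have zp: "z1 > 0" unfolding z1_def using z by simp
    have "exp 1 < exp (ln z1)" using \<open>ln z1 > 1\<close> by simp
    hence "z1 > exp 1" using zp by simp
    moreover have "exp 1 \<ge> (2::real)" using exp_ge_add_one_self[of 1] by simp
    ultimately show ?thesis by simp
  qed
  have z1z: "z1 \<le> z" unfolding z1_def by simp
  define \<A> where "\<A> = {A\<in>Pow P. card A \<le> k}"
  have famA: "finite A \<and> (\<forall>p\<in>A. prime p) \<and> real (\<Prod>A) \<le> z1" if "A \<in> \<A>" for A
  proof -
    have AP: "A \<subseteq> P" "card A \<le> k" using that unfolding \<A>_def by auto
    have fA: "finite A" using AP finP finite_subset by blast
    have pr: "\<forall>p\<in>A. prime p" using AP Pp by blast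
    have W1: "W \<ge> 1" unfolding W_def using L0 K1 by simp
    have "real (\<Prod>A) = (\<Prod>p\<in>A. real p)" by (simp add: of_nat_prod)
    also have "\<dots> \<le> (\<Prod>p\<in>A. W)"
      using AP unfolding P_def PS_def by (intro prod_mono) auto
    also have "\<dots> = W ^ card A" by simp
    also have "\<dots> \<le> W ^ k" using W1 AP by (intro power_increasing) auto
    also have "\<dots> = exp (real k * (L * K1))" unfolding W_def by (simp add: exp_of_nat_mult[symmetric] mult_ac)
    also have "\<dots> \<le> exp (ln z1)" using kle lnz1 by simp
    also have "\<dots> = z1" using z1_2 by simp
    finally show ?thesis using fA pr by simp
  qed
  have S_lo: "(\<Prod>p\<in>P. 1 + y p) - exp (- real k) * (\<Prod>p\<in>P. 1 + exp 1 * y p) \<le> (\<Sum>m\<in>Iz z1. t_fun x m / sqrt (real m))"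
  proof -
    have "(\<Prod>p\<in>P. 1 + y p) - exp (- real k) * (\<Prod>p\<in>P. 1 + exp 1 * y p) \<le> (\<Sum>A\<in>\<A>. \<Prod>p\<in>A. y p)"
      unfolding \<A>_def by (rule subset_sum_lower[OF finP y0])
    also have "\<dots> \<le> (\<Sum>m\<in>Iz z1. t_fun x m / sqrt (real m))"
      unfolding y_def by (rule S_ge_family[OF lam0 _ famA]) (simp add: \<A>_def finP)
    finally show ?thesis .
  qed
  define S where "S = (\<Sum>m\<in>Iz z1. t_fun x m / sqrt (real m))"
  have Sge: "S \<ge> exp ((1 - 1/l) * Y) / 2"
  proof -
    have "exp (- real k) * (\<Prod>p\<in>P. 1 + exp 1 * y p) \<le> exp (- real k) * exp (exp 1 * Y)"
      using prod_up by simp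
    also have "\<dots> = exp (exp 1 * Y - real k)" by (simp add: exp_add[symmetric])
    also have "\<dots> \<le> exp ((1 - 1/l) * Y - 1)"
    proof -
      have Y0: "Y \<ge> 0" unfolding Y_def using y0 by (simp add: sum_nonneg)
      have "exp 1 \<le> (3::real)" by (rule exp_le)
      hence "exp 1 * Y \<le> 3 * Y" using Y0 by (simp add: mult_right_mono)
      moreover have "(1 - 1/l) * Y \<ge> 0" using l0 Y0 by simp
      ultimately have "exp 1 * Y - real k \<le> (1 - 1/l) * Y - 1" using kge Y0 by linarith
      thus ?thesis by simp
    qed
    also have "\<dots> = exp ((1 - 1/l) * Y) * exp (-1)" by (simp add: exp_add[symmetric])
    also have "\<dots> \<le> exp ((1 - 1/l) * Y) * (1/2)"
    proof -
      have "exp (-1::real) \<le> 1/2"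
      proof -
        have "exp (1::real) \<ge> 2" using exp_ge_add_one_self[of 1] by simp
        thus ?thesis by (simp add: exp_minus field_simps)
      qed
      thus ?thesis by (intro mult_left_mono) auto
    qed
    finally have "exp (- real k) * (\<Prod>p\<in>P. 1 + exp 1 * y p) \<le> exp ((1 - 1/l) * Y) / 2" by simp
    thus ?thesis using S_lo prod_lo unfolding S_def by linarith
  qed
  have "3 * 3 \<le> l * l" using l0 by (intro mult_mono) auto
  hence l3': "lam x ^ 2 \<ge> 3" unfolding l_def by (simp add: power2_eq_square)
  have P1: "ln 2 / (8 * exp 2) / ln z1 * S ^ 2 \<le> sum (Fp x) (Cop z1)"
    unfolding S_def by (rule part1_main[OF lam0 l3' z1_2])
  have C0: "ln 2 / (8 * exp 2) > (0::real)" by simp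
  have lnz1p: "ln z1 > 0" using lnz1(1) l0 LL1 by (smt (verit) mult_nonneg_nonneg)
  have "0 \<le> ln 2 / (8 * exp 2) / ln z1" using C0 lnz1p by simp
  have "ln 2 / (8 * exp 2) / (4 * l * LL) \<le> ln 2 / (8 * exp 2) / ln z1"
    using lnz1 l0 LL1 C0 by (intro divide_left_mono) auto
  moreover have "exp ((1 - 1/l) * Y) / 2 \<ge> 0" by simp
  hence "(exp ((1 - 1/l) * Y) / 2) ^ 2 \<le> S ^ 2" using Sge by (intro power_mono) auto
  ultimately have "ln 2 / (8 * exp 2) / (4 * l * LL) * (exp ((1 - 1/l) * Y) / 2) ^ 2 \<le> ln 2 / (8 * exp 2) / ln z1 * S ^ 2"
    using C0 l0 LL1 lnz1 by (intro mult_mono) auto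
  also have "\<dots> \<le> sum (Fp x) (Cop z1)" by (rule P1)
  also have "\<dots> \<le> sum (Fp x) (Cop z)" by (rule Cop_mono[OF lam0 z1z])
  finally have main: "ln 2 / (8 * exp 2) / (4 * l * LL) * (exp ((1 - 1/l) * Y) / 2) ^ 2 \<le> sum (Fp x) (Cop z)" .
  have sqeq: "(exp ((1 - 1/l) * Y) / 2) ^ 2 = (1/4) * exp (2 * (1 - 1/l) * Y)"
    by (simp add: power2_eq_square exp_add[symmetric] field_simps)
  moreover have "exp (2 * (1 - 1/l) * Ylow) \<le> exp (2 * (1 - 1/l) * Y)"
  proof -
    have "1/l \<le> 1" using l0 by simp
    hence "2 * (1 - 1/l) \<ge> 0" by simp
    hence "2 * (1 - 1/l) * Ylow \<le> 2 * (1 - 1/l) * Y" using Ylo by (rule mult_left_mono[rotated])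
    thus ?thesis by simp
  qed
  moreover have C'0: "ln 2 / (8 * exp 2) / (4 * l * LL) * (1/4) \<ge> 0" using C0 l0 LL1 by simp
  ultimately have "ln 2 / (8 * exp 2) / (4 * l * LL) * (1/4) * exp (2 * (1 - 1/l) * Ylow) \<le>
      ln 2 / (8 * exp 2) / (4 * l * LL) * (1/4) * exp (2 * (1 - 1/l) * Y)"
    by (intro mult_left_mono) auto
  also have "\<dots> = ln 2 / (8 * exp 2) / (4 * l * LL) * (exp ((1 - 1/l) * Y) / 2) ^ 2"
    by (subst sqeq) (simp only: mult.assoc)
  also have "\<dots> \<le> sum (Fp x) (Cop z)" by (rule main)
  finally have "ln 2 / (8 * exp 2) / (4 * l * LL) * (1/4) * exp (2 * (1 - 1/l) * Ylow) \<le> sum (Fp x) (Cop z)" .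
  thus ?thesis unfolding Ylow_def l_def L_def LL_def by simp
qed


lemma good_pointwise:
  fixes l e c K C :: real and J :: nat
  assumes e: "0 < e" "e \<le> 1" and cdef: "c = 1 + e/4" and J: "(1/c)^J < e/4" and Kdef: "K = c^J"
    and C: "C > 0"
    and a: "3 \<le> l" "16/e \<le> l"
    and b: "4 \<le> ln l" "2*K \<le> ln l" "32 * real J / e \<le> ln l" "8/e \<le> ln l"
    and cc: "1 \<le> ln (ln l)" "(2*K+2)*(2*K)/3 \<le> ln (ln l)"
    and d: "1 \<le> l / ln l"
    and ee: "ln (l * ln (ln l)) * ln l / l < e/16"
    and f: "ln l / l < e / (16 * (\<bar>ln 16 - ln C\<bar> + 1))"
  shows "8 \<le> ln (l^2)" "ln (l^2) * K \<le> (ln l)^2"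
    "4 * l * K / ln (l ^ 2) + 2 \<le> 3 * l * ln (ln l) / (ln (l ^ 2) * K)"
    "exp ((1 - e) * l / ln l) \<le> C / (4 * l * ln (ln l)) * (1/4) *
           exp (2 * (1 - 1 / l) * ((1 - 1 / (ln (l ^ 2))^2) * l *
              ((1 - (1/c) ^ J) / (c * ln (l ^ 2)) - 8 * real J / (ln (l ^ 2))^2)))"
proof -
  define ll where "ll = ln l"
  define LL where "LL = ln (ln l)"
  define q where "q = l / ll"
  have l0: "l > 0" using a by simp
  have ll0: "ll \<ge> 4" using b unfolding ll_def by simp
  have L2: "ln (l^2) = 2 * ll" unfolding ll_def using l0 by (simp add: ln_realpow)
  have K1: "K \<ge> 1" unfolding Kdef cdef using e by (simp add: one_le_power)
  have q1: "q \<ge> 1" using d unfolding q_def ll_def .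
  have LL1: "LL \<ge> 1" using cc(1) unfolding LL_def .
  show "8 \<le> ln (l^2)" using L2 ll0 by simp
  show "ln (l^2) * K \<le> (ln l)^2"
  proof -
    have "2 * K * ll \<le> ll * ll" using b(2) ll0 unfolding ll_def by (intro mult_right_mono) auto
    thus ?thesis unfolding L2 ll_def[symmetric] by (simp add: power2_eq_square mult_ac)
  qed
  show "4 * l * K / ln (l ^ 2) + 2 \<le> 3 * l * ln (ln l) / (ln (l ^ 2) * K)"
  proof -
    have e1: "4 * l * K / ln (l ^ 2) = 2 * K * q" unfolding L2 q_def using ll0 by (simp add: field_simps)
    have e2: "3 * l * ln (ln l) / (ln (l ^ 2) * K) = (3 * LL / (2 * K)) * q"
      unfolding L2 q_def LL_def using ll0 K1 by (simp add: field_simps)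
    have "2 * K + 2 \<le> 3 * LL / (2 * K)" using cc(2) K1 unfolding LL_def by (simp add: pos_le_divide_eq mult_ac)
    hence "(2 * K + 2) * q \<le> (3 * LL / (2 * K)) * q" using q1 by (intro mult_right_mono) auto
    moreover have "2 * K * q + 2 \<le> (2 * K + 2) * q" using q1 by (simp add: algebra_simps)
    ultimately show ?thesis unfolding e1 e2 by linarith
  qed
  define L where "L = ln (l^2)"
  define A where "A = (1 - (1/c) ^ J) / (c * L)"
  define B where "B = 8 * real J / L^2"
  define X where "X = 2 * l * (A - B)"
  define fct where "fct = (1 - 1 / l) * (1 - 1 / L^2)"
  have L: "L = 2 * ll" unfolding L_def by (rule L2)
  have c1: "c \<ge> 1" unfolding cdef using e by simp
  have F1: "2 * l * A = q * ((1 - (1/c) ^ J) / c)" unfolding A_def L q_def using ll0 c1 by (simp add: field_simps)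
  have F2: "(1 - (1/c) ^ J) / c \<ge> 1 - e/2"
  proof -
    have "1 - (1/c)^J \<ge> 1 - e/4" using J by simp
    moreover have "(1 - e/2) * c \<le> 1 - e/4" unfolding cdef using e by (simp add: algebra_simps power2_eq_square)
    ultimately have "(1 - e/2) * c \<le> 1 - (1/c)^J" by linarith
    thus ?thesis using c1 by (simp add: pos_le_divide_eq)
  qed
  have F3: "2 * l * B \<le> (e/8) * q"
  proof -
    have "2 * l * B = (4 * real J / ll) * q" unfolding B_def L q_def using ll0 by (simp add: field_simps power2_eq_square)
    moreover have "4 * real J / ll \<le> e / 8"
      using b(3) e ll0 unfolding ll_def by (simp add: divide_simps mult_ac; simp add: field_simps)
    ultimately show ?thesis using q1 mult_right_mono[of "4 * real J / ll" "e/8" q] by simp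
  qed
  have Xlo: "X \<ge> (1 - 5*e/8) * q"
  proof -
    have "X = 2 * l * A - 2 * l * B" unfolding X_def by (simp add: algebra_simps)
    moreover have "2 * l * A \<ge> (1 - e/2) * q"
    proof -
      have "q * (1 - e/2) \<le> q * ((1 - (1/c) ^ J) / c)" using F2 q1 by (intro mult_left_mono) auto
      thus ?thesis unfolding F1 by (simp add: mult.commute)
    qed
    moreover have "(1 - e/2) * q - (e/8) * q = (1 - 5*e/8) * q" by (simp add: algebra_simps)
    ultimately show ?thesis using F3 by linarith
  qed
  have "(1 - 5*e/8) * q \<ge> 0" by (intro mult_nonneg_nonneg) (use e q1 in auto)
  hence X0: "X \<ge> 0" using Xlo by linarith
  have fct: "fct \<ge> 1 - e/8" "fct \<le> 1"
  proof -
    have i1: "1/l \<le> e/16" using a(2) e l0 by (simp add: divide_simps mult_ac; simp add: field_simps)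
    have Lb: "L \<ge> 16/e" using b(4) unfolding L ll_def by simp
    have L1: "L \<ge> 1" using L ll0 by simp
    have "1/L^2 \<le> 1/L" using L1 by (simp add: divide_simps power2_eq_square)
    also have "1/L \<le> e/16" using Lb e L1 by (simp add: divide_simps mult_ac; simp add: field_simps)
    finally have i2: "1/L^2 \<le> e/16" .
    have p1: "0 \<le> 1/l" "1/l \<le> 1" using l0 a by auto
    have LL': "1 * 1 \<le> L * L" using L1 by (intro mult_mono) auto
    have p2: "0 \<le> 1/L^2" "1/L^2 \<le> 1" using LL' by (auto simp: power2_eq_square)
    have ab: "(1 - a) * (1 - b) = 1 - a - b + a * b" for a b :: real by (simp add: algebra_simps)
    have "fct = 1 - 1/l - 1/L^2 + (1/l)*(1/L^2)" unfolding fct_def by (rule ab)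
    moreover have "(1/l)*(1/L^2) \<ge> 0" using p1 p2 by simp
    ultimately show "fct \<ge> 1 - e/8" using i1 i2 by linarith
    show "fct \<le> 1" unfolding fct_def using p1 p2 by (smt (verit) mult_le_one)
  qed
  have E: "fct * X \<ge> (1 - 6*e/8) * q"
  proof -
    have "fct * X \<ge> (1 - e/8) * X" using fct X0 by (intro mult_right_mono) auto
    moreover have "(1 - e/8) * X \<ge> (1 - e/8) * ((1 - 5*e/8) * q)" using Xlo e by (intro mult_left_mono) auto
    moreover have "(1 - e/8) * ((1 - 5*e/8) * q) \<ge> (1 - 6*e/8) * q"
    proof -
      have "(1 - e/8) * (1 - 5*e/8) \<ge> 1 - 6*e/8" using e by (simp add: algebra_simps)
      thus ?thesis using q1 by (smt (verit) mult_right_mono mult.assoc)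
    qed
    ultimately show ?thesis by linarith
  qed
  have G: "ln (C / (16 * l * LL)) \<ge> - (e/8) * q"
  proof -
    have lLL: "l * LL > 0" using l0 LL1 by simp
    have eq: "ln (C / (16 * l * LL)) = ln C - ln 16 - ln (l * LL)"
      using C lLL l0 LL1 by (simp add: ln_div ln_mult mult.assoc)
    have g1: "ln (l * LL) < (e/16) * q"
    proof -
      have "ln (l * LL) * ll / l < e/16" using ee unfolding LL_def ll_def by simp
      hence "ln (l * LL) < e/16 * (l / ll)" using l0 ll0 by (simp add: divide_simps mult_ac; simp add: field_simps)
      thus ?thesis unfolding q_def .
    qed
    have g2: "ln 16 - ln C \<le> (e/16) * q"
    proof -
      define K2 where "K2 = \<bar>ln 16 - ln C\<bar> + 1"
      have K2: "K2 \<ge> 1" unfolding K2_def by simp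
      have "ll / l < e / (16 * K2)" using f unfolding K2_def ll_def .
      hence "1 / q < e / (16 * K2)" unfolding q_def by simp
      hence "16 * K2 / e < q" using e K2 q1 by (simp add: divide_simps mult_ac; simp add: field_simps)
      hence "K2 < (e/16) * q" using e by (simp add: divide_simps mult_ac; simp add: field_simps)
      thus ?thesis unfolding K2_def by linarith
    qed
    show ?thesis using eq g1 g2 by linarith
  qed
  have T: "(1 - e) * l / ln l \<le> ln (C / (16 * l * LL)) + fct * X"
  proof -
    have "(1 - e) * l / ln l = (1 - e) * q" unfolding q_def ll_def by simp
    moreover have "(1 - e) * q \<le> - (e/8) * q + (1 - 6*e/8) * q" using q1 e by (simp add: algebra_simps)
    ultimately show ?thesis using E G by linarith
  qed
  have expr: "2 * (1 - 1 / l) * ((1 - 1 / (ln (l ^ 2))^2) * l *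
              ((1 - (1/c) ^ J) / (c * ln (l ^ 2)) - 8 * real J / (ln (l ^ 2))^2)) = fct * X"
  proof -
    have gen: "2*(1-a)*((1-b)*l*w) = ((1-a)*(1-b))*(2*l*w)" for a b w :: real by (simp add: algebra_simps)
    show ?thesis unfolding fct_def X_def A_def B_def L_def by (rule gen)
  qed
  have Cp: "C / (16 * l * LL) > 0" using C l0 LL1 by simp
  have "exp ((1 - e) * l / ln l) \<le> exp (ln (C / (16 * l * LL)) + fct * X)" using T by simp
  also have "\<dots> = C / (16 * l * LL) * exp (fct * X)" using Cp by (simp add: exp_add)
  also have "\<dots> = C / (4 * l * ln (ln l)) * (1/4) * exp (fct * X)" unfolding LL_def by simp
  finally show "exp ((1 - e) * l / ln l) \<le> C / (4 * l * ln (ln l)) * (1/4) *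
           exp (2 * (1 - 1 / l) * ((1 - 1 / (ln (l ^ 2))^2) * l *
              ((1 - (1/c) ^ J) / (c * ln (l ^ 2)) - 8 * real J / (ln (l ^ 2))^2)))"
    unfolding expr .
qed


lemma lam_at_top: "filterlim lam at_top at_top"
proof -
  have "lam = (\<lambda>x. sqrt (ln x * ln (ln x)))" by (rule ext) (simp add: lam_def)
  moreover have "filterlim (\<lambda>x::real. sqrt (ln x * ln (ln x))) at_top at_top" by real_asymp
  ultimately show ?thesis by simp
qed

lemma ev_lam: "eventually P at_top \<Longrightarrow> eventually (\<lambda>x. P (lam x)) at_top"
  using lam_at_top unfolding filterlim_iff by blast

lemma part1_pt:
  assumes X: "2 \<le> lam x" and z: "2 \<le> z"
  shows "(\<Sum>(m1, m2) \<in> {(m1, m2). 1 \<le> m1 \<and> real m1 \<le> z \<and> 1 \<le> m2 \<and> real m2 \<le> z \<and> coprime m1 m2}.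
               t_fun x m1 * t_fun x m2 * real m1 * real m2 / real (max m1 m2) ^ 3)
            \<ge> ln 2 / (8 * exp 2) / ln z * (\<Sum>m \<in> {m. 1 \<le> m \<and> real m \<le> z}. t_fun x m / sqrt (real m)) ^ 2"
proof -
  have l: "0 \<le> lam x" using X by simp
  have "2 * 2 \<le> lam x * lam x" using X by (intro mult_mono) auto
  hence l3: "lam x ^ 2 \<ge> 3" by (simp add: power2_eq_square)
  have "ln 2 / (8 * exp 2) / ln z * (\<Sum>m\<in>Iz z. t_fun x m / sqrt (real m)) ^ 2 \<le> sum (Fp x) (Cop z)"
    by (rule part1_main[OF l l3 z])
  thus ?thesis unfolding Fp_def Cop_def Iz_def by simp
qed

lemma part1_final:
  "\<exists>C>0. \<exists>X0. \<forall>x\<ge>X0. \<forall>z::real. z \<ge> 2 \<longrightarrow>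
            (\<Sum>(m1, m2) \<in> {(m1, m2). 1 \<le> m1 \<and> real m1 \<le> z \<and> 1 \<le> m2 \<and> real m2 \<le> z \<and> coprime m1 m2}.
               t_fun x m1 * t_fun x m2 * real m1 * real m2 / real (max m1 m2) ^ 3)
            \<ge> C / ln z * (\<Sum>m \<in> {m. 1 \<le> m \<and> real m \<le> z}. t_fun x m / sqrt (real m)) ^ 2"
proof -
  have "eventually (\<lambda>l::real. 2 \<le> l) at_top" by (rule eventually_ge_at_top)
  hence "eventually (\<lambda>x. 2 \<le> lam x) at_top" by (rule ev_lam)
  then obtain X0 where X0: "\<And>x. x \<ge> X0 \<Longrightarrow> 2 \<le> lam x" unfolding eventually_at_top_linorder by blast
  have "0 < ln 2 / (8 * exp 2 :: real)" by simp
  thus ?thesis using X0 part1_pt by blast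
qed

lemma part2_final:
  "\<forall>\<epsilon>>0. \<exists>X0. \<forall>x\<ge>X0. \<forall>z::real. z \<ge> 1 \<longrightarrow>
            ln z > 3 * lam x * ln (ln (lam x)) \<longrightarrow>
            (\<Sum>(m1, m2) \<in> {(m1, m2). 1 \<le> m1 \<and> real m1 \<le> z \<and> 1 \<le> m2 \<and> real m2 \<le> z \<and> coprime m1 m2}.
               t_fun x m1 * t_fun x m2 * real m1 * real m2 / real (max m1 m2) ^ 3)
            \<ge> exp ((1 - \<epsilon>) * lam x / ln (lam x))"
proof (intro allI impI)
  fix \<epsilon> :: real assume \<epsilon>: "\<epsilon> > 0"
  define e where "e = min \<epsilon> 1"
  have e: "0 < e" "e \<le> 1" "e \<le> \<epsilon>" unfolding e_def using \<epsilon> by auto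
  define c where "c = 1 + e/4"
  have c1: "c > 1" unfolding c_def using e by simp
  obtain J where J: "(1/c)^J < e/4" using real_arch_pow_inv[of "e/4" "1/c"] c1 e by auto
  define K where "K = c^J"
  define C where "C = ln 2 / (8 * exp 2 :: real)"
  have C0: "C > 0" unfolding C_def by simp
  have lnat: "filterlim (\<lambda>l::real. ln l) at_top at_top" by real_asymp
  have llnat: "filterlim (\<lambda>l::real. ln (ln l)) at_top at_top" by real_asymp
  have t1: "((\<lambda>l::real. ln (l * ln (ln l)) * ln l / l) \<longlongrightarrow> 0) at_top" by real_asymp
  have t2: "((\<lambda>l::real. ln l / l) \<longlongrightarrow> 0) at_top" by real_asymp
  have q1: "eventually (\<lambda>l::real. 1 \<le> l / ln l) at_top" by real_asymp
  define M1 where "M1 = max (max 4 (2*K)) (max (32 * real J / e) (8/e))"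
  define M2 where "M2 = max 1 ((2*K+2)*(2*K)/3)"
  define B where "B = e / (16 * (\<bar>ln 16 - ln C\<bar> + 1))"
  have "0 < 1 + \<bar>ln 16 - ln C\<bar>" by (intro add_pos_nonneg) auto
  hence "0 < 16 * (\<bar>ln 16 - ln C\<bar> + 1)" by (simp add: add.commute)
  hence B0: "B > 0" unfolding B_def using e by (intro divide_pos_pos) auto
  have ev: "eventually (\<lambda>l. 3 \<le> l \<and> 16/e \<le> l \<and> M1 \<le> ln l \<and> M2 \<le> ln (ln l) \<and> 1 \<le> l / ln l
      \<and> ln (l * ln (ln l)) * ln l / l < e/16 \<and> ln l / l < B) at_top"
  proof -
    have a1: "eventually (\<lambda>l::real. 3 \<le> l) at_top" by (rule eventually_ge_at_top)
    have a2: "eventually (\<lambda>l::real. 16/e \<le> l) at_top" by (rule eventually_ge_at_top)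
    have a3: "eventually (\<lambda>l::real. M1 \<le> ln l) at_top" using lnat unfolding filterlim_at_top by blast
    have a4: "eventually (\<lambda>l::real. M2 \<le> ln (ln l)) at_top" using llnat unfolding filterlim_at_top by blast
    have a6: "eventually (\<lambda>l::real. ln (l * ln (ln l)) * ln l / l < e/16) at_top"
      using order_tendstoD(2)[OF t1, of "e/16"] e by simp
    have a7: "eventually (\<lambda>l::real. ln l / l < B) at_top"
      using order_tendstoD(2)[OF t2, of B] B0 by simp
    show ?thesis using a1 a2 a3 a4 q1 a6 a7 by eventually_elim auto
  qed
  note evx = ev_lam[OF ev]
  from evx obtain X0 where X0: "\<And>x. x \<ge> X0 \<Longrightarrow> 3 \<le> lam x \<and> 16/e \<le> lam x \<and> M1 \<le> ln (lam x) \<and> M2 \<le> ln (ln (lam x))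
      \<and> 1 \<le> lam x / ln (lam x) \<and> ln (lam x * ln (ln (lam x))) * ln (lam x) / lam x < e/16 \<and> ln (lam x) / lam x < B"
    unfolding eventually_at_top_linorder by blast
  show "\<exists>X0. \<forall>x\<ge>X0. \<forall>z::real. z \<ge> 1 \<longrightarrow>
            ln z > 3 * lam x * ln (ln (lam x)) \<longrightarrow>
            (\<Sum>(m1, m2) \<in> {(m1, m2). 1 \<le> m1 \<and> real m1 \<le> z \<and> 1 \<le> m2 \<and> real m2 \<le> z \<and> coprime m1 m2}.
               t_fun x m1 * t_fun x m2 * real m1 * real m2 / real (max m1 m2) ^ 3)
            \<ge> exp ((1 - \<epsilon>) * lam x / ln (lam x))"
  proof (intro exI[of _ X0] allI impI)
    fix x z :: real assume x: "X0 \<le> x" and z: "1 \<le> z" "ln z > 3 * lam x * ln (ln (lam x))"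
    note h = X0[OF x]
    define l where "l = lam x"
    have hh: "3 \<le> l" "16/e \<le> l" "4 \<le> ln l" "2*K \<le> ln l" "32 * real J / e \<le> ln l" "8/e \<le> ln l"
      "1 \<le> ln (ln l)" "(2*K+2)*(2*K)/3 \<le> ln (ln l)" "1 \<le> l / ln l"
      "ln (l * ln (ln l)) * ln l / l < e/16" "ln l / l < e / (16 * (\<bar>ln 16 - ln C\<bar> + 1))"
      using h unfolding l_def M1_def M2_def B_def by auto
    note g = good_pointwise[OF e(1,2) c_def J K_def C0 hh]
    have core: "ln 2 / (8 * exp 2) / (4 * lam x * ln (ln (lam x))) * (1/4) *
           exp (2 * (1 - 1 / lam x) * ((1 - 1 / (ln (lam x ^ 2))^2) * lam x *
              ((1 - (1/c) ^ J) / (c * ln (lam x ^ 2)) - 8 * real J / (ln (lam x ^ 2))^2)))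
         \<le> sum (Fp x) (Cop z)"
      using part2_core[of x c J z] hh g c1 z unfolding l_def K_def by auto
    have "exp ((1 - \<epsilon>) * lam x / ln (lam x)) \<le> exp ((1 - e) * lam x / ln (lam x))"
    proof -
      have lp: "lam x / ln (lam x) \<ge> 0" using hh unfolding l_def by simp
      have "(1 - \<epsilon>) * (lam x / ln (lam x)) \<le> (1 - e) * (lam x / ln (lam x))"
        using e lp by (intro mult_right_mono) auto
      thus ?thesis by simp
    qed
    also have "\<dots> \<le> sum (Fp x) (Cop z)" using g(4) core unfolding l_def C_def by linarith
    finally show "(\<Sum>(m1, m2) \<in> {(m1, m2). 1 \<le> m1 \<and> real m1 \<le> z \<and> 1 \<le> m2 \<and> real m2 \<le> z \<and> coprime m1 m2}.
               t_fun x m1 * t_fun x m2 * real m1 * real m2 / real (max m1 m2) ^ 3)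
            \<ge> exp ((1 - \<epsilon>) * lam x / ln (lam x))"
      unfolding Fp_def Cop_def by simp
  qed
qed

theorem mainTheorem14:
  shows "(\<exists>C>0. \<exists>X0. \<forall>x\<ge>X0. \<forall>z::real. z \<ge> 2 \<longrightarrow>
            (\<Sum>(m1, m2) \<in> {(m1, m2). 1 \<le> m1 \<and> real m1 \<le> z \<and> 1 \<le> m2 \<and> real m2 \<le> z \<and> coprime m1 m2}.
               t_fun x m1 * t_fun x m2 * real m1 * real m2 / real (max m1 m2) ^ 3)
            \<ge> C / ln z * (\<Sum>m \<in> {m. 1 \<le> m \<and> real m \<le> z}. t_fun x m / sqrt (real m)) ^ 2)
       \<and> (\<forall>\<epsilon>>0. \<exists>X0. \<forall>x\<ge>X0. \<forall>z::real. z \<ge> 1 \<longrightarrow>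
            ln z > 3 * lam x * ln (ln (lam x)) \<longrightarrow>
            (\<Sum>(m1, m2) \<in> {(m1, m2). 1 \<le> m1 \<and> real m1 \<le> z \<and> 1 \<le> m2 \<and> real m2 \<le> z \<and> coprime m1 m2}.
               t_fun x m1 * t_fun x m2 * real m1 * real m2 / real (max m1 m2) ^ 3)
            \<ge> exp ((1 - \<epsilon>) * lam x / ln (lam x)))"
  using part1_final part2_final by blast


end
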